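(* Let $G$ be a cubic graph with a 3-decomposition, let $u$ be a vertex of $G$ with neighbours $v_1,v_2,v_3$, and let $P$ be a copy, on new vertices, of the Petersen graph with one vertex removed; let $p_1,p_2,p_3$ be the three vertices of degree 2 in $P$. Let $H$ be obtained from $G$ by deleting $u$, adding $P$, and adding the edges $p_1v_1,p_2v_2,p_3v_3$. Then $H$ has a 3-decomposition.
   Context: All graphs are finite and simple; cubic means 3-regular. A 3-decomposition of a graph is a partition of its edge set into the edge sets of a spanning tree, a (possibly empty) 2-regular subgraph, and a (possibly empty) matching. *)

theory Defs
  imports Main
begin

definition graph :: "'a set \<Rightarrow> 'a set set \<Rightarrow> bool" where
  "graph V E \<longleftrightarrow> finite V \<and> (\<forall>e\<in>E. \<exists>x y. x \<in> V \<and> y \<in> V \<and> x \<noteq> y \<and> e = {x, y})"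

definition degree :: "'a set set \<Rightarrow> 'a \<Rightarrow> nat" where
  "degree E v = card {e \<in> E. v \<in> e}"

definition cubic :: "'a set \<Rightarrow> 'a set set \<Rightarrow> bool" where
  "cubic V E \<longleftrightarrow> graph V E \<and> (\<forall>v\<in>V. degree E v = 3)"

definition connected_on :: "'a set \<Rightarrow> 'a set set \<Rightarrow> bool" where
  "connected_on V T \<longleftrightarrow> (\<forall>x\<in>V. \<forall>y\<in>V. (\<lambda>a b. {a, b} \<in> T)\<^sup>*\<^sup>* x y)"

definition is_cycle :: "'a set set \<Rightarrow> 'a list \<Rightarrow> bool" where
  "is_cycle E xs \<longleftrightarrow> length xs \<ge> 3 \<and> distinct xs \<and>
     (\<forall>i < length xs. {xs ! i, xs ! ((i + 1) mod length xs)} \<in> E)"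

definition acyclic_edges :: "'a set set \<Rightarrow> bool" where
  "acyclic_edges E \<longleftrightarrow> \<not> (\<exists>xs. is_cycle E xs)"

definition spanning_tree :: "'a set \<Rightarrow> 'a set set \<Rightarrow> 'a set set \<Rightarrow> bool" where
  "spanning_tree V E T \<longleftrightarrow> T \<subseteq> E \<and> connected_on V T \<and> acyclic_edges T"

text \<open>(Possibly empty) 2-regular subgraph, given by its edge set; its vertices are those covered.\<close>
definition two_regular_sub :: "'a set set \<Rightarrow> 'a set set \<Rightarrow> bool" where
  "two_regular_sub E C \<longleftrightarrow> C \<subseteq> E \<and> (\<forall>v \<in> \<Union>C. degree C v = 2)"

definition matching :: "'a set set \<Rightarrow> 'a set set \<Rightarrow> bool" where
  "matching E M \<longleftrightarrow> M \<subseteq> E \<and> (\<forall>e\<in>M. \<forall>f\<in>M. e \<noteq> f \<longrightarrow> e \<inter> f = {})"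

definition three_decomposition :: "'a set \<Rightarrow> 'a set set \<Rightarrow> bool" where
  "three_decomposition V E \<longleftrightarrow> (\<exists>T C M. spanning_tree V E T \<and> two_regular_sub E C \<and> matching E M \<and>
      T \<union> C \<union> M = E \<and> T \<inter> C = {} \<and> T \<inter> M = {} \<and> C \<inter> M = {})"

text \<open>Petersen graph on 0..9: outer 5-cycle, spokes, inner pentagram.\<close>
definition petersen_edges :: "nat set set" where
  "petersen_edges = {{i, (i + 1) mod 5} | i. i < 5} \<union> {{i, i + 5} | i. i < 5}
                    \<union> {{i + 5, (i + 2) mod 5 + 5} | i. i < 5}"

definition P_verts :: "nat set" where "P_verts = {1..9}"
definition P_edges :: "nat set set" where "P_edges = {e \<in> petersen_edges. 0 \<notin> e}"

definition H_verts :: "'a set \<Rightarrow> 'a \<Rightarrow> ('a + nat) set" where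
  "H_verts V u = Inl ` (V - {u}) \<union> Inr ` P_verts"

definition H_edges :: "'a set set \<Rightarrow> 'a \<Rightarrow> 'a \<Rightarrow> 'a \<Rightarrow> 'a \<Rightarrow> nat \<Rightarrow> nat \<Rightarrow> nat \<Rightarrow> ('a + nat) set set" where
  "H_edges E u v1 v2 v3 p1 p2 p3 =
     (`) Inl ` {e \<in> E. u \<notin> e} \<union> (`) Inr ` P_edges
     \<union> {{Inl v1, Inr p1}, {Inl v2, Inr p2}, {Inl v3, Inr p3}}"

end

theory Submission
  imports Defs
begin

abbreviation adj :: "'a set set \<Rightarrow> 'a \<Rightarrow> 'a \<Rightarrow> bool" where
  "adj T \<equiv> (\<lambda>a b. {a, b} \<in> T)"

lemma adj_sym: "(adj T)\<^sup>*\<^sup>* a b \<Longrightarrow> (adj T)\<^sup>*\<^sup>* b a"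
proof (induction rule: rtranclp_induct)
  case base then show ?case by simp
next
  case (step y z)
  have "adj T z y" using step(2) by (simp add: insert_commute)
  then show ?case using step(3) by (rule converse_rtranclp_into_rtranclp)
qed

lemma walk_map:
  assumes "\<And>a b. R a b \<Longrightarrow> S (f a) (f b) \<or> f a = f b" and "R\<^sup>*\<^sup>* x y"
  shows "S\<^sup>*\<^sup>* (f x) (f y)"
  using assms(2)
proof (induction rule: rtranclp_induct)
  case base then show ?case by simp
next
  case (step y z)
  then show ?case using assms(1)[OF step(2)] by (auto intro: rtranclp.rtrancl_into_rtrancl)
qed

lemma walk_mono:
  assumes "\<And>a b. R a b \<Longrightarrow> S\<^sup>*\<^sup>* a b" and "R\<^sup>*\<^sup>* x y"
  shows "S\<^sup>*\<^sup>* x y"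
  using assms(2)
proof (induction rule: rtranclp_induct)
  case base then show ?case by simp
next
  case (step y z)
  then show ?case using assms(1)[OF step(2)] by (auto intro: rtranclp_trans)
qed

lemma distinct_nth_neq:
  "distinct xs \<Longrightarrow> i < length xs \<Longrightarrow> j < length xs \<Longrightarrow> i \<noteq> j \<Longrightarrow> xs!i \<noteq> xs!j"
  by (simp add: nth_eq_iff_index_eq)

lemma walk_path:
  assumes "(adj T)\<^sup>*\<^sup>* a b"
  shows "\<exists>xs. xs \<noteq> [] \<and> hd xs = a \<and> last xs = b \<and> distinct xs \<and>
            (\<forall>i. Suc i < length xs \<longrightarrow> {xs!i, xs!Suc i} \<in> T)"
  using assms
proof (induction rule: rtranclp_induct)
  case base
  then show ?case by (rule exI[of _ "[a]"]) simp
next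
  case (step b c)
  then obtain xs where xs: "xs \<noteq> []" "hd xs = a" "last xs = b" "distinct xs"
    "\<forall>i. Suc i < length xs \<longrightarrow> {xs!i, xs!Suc i} \<in> T" by blast
  show ?case
  proof (cases "c \<in> set xs")
    case True
    then obtain k where k: "k < length xs" "xs!k = c" by (metis in_set_conv_nth)
    let ?ys = "take (Suc k) xs"
    have "?ys \<noteq> []" using xs(1) by simp
    moreover have "hd ?ys = a" using xs(1,2) by simp
    moreover have "last ?ys = c" using k by (simp add: take_Suc_conv_app_nth)
    moreover have "distinct ?ys" using xs(4) by simp
    moreover have "\<forall>i. Suc i < length ?ys \<longrightarrow> {?ys!i, ?ys!Suc i} \<in> T"
      using xs(5) by simp
    ultimately show ?thesis by blast
  next
    case False
    let ?ys = "xs @ [c]"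
    have "?ys \<noteq> []" by simp
    moreover have "hd ?ys = a" using xs(1,2) by simp
    moreover have "last ?ys = c" by simp
    moreover have "distinct ?ys" using xs(4) False by simp
    moreover have "\<forall>i. Suc i < length ?ys \<longrightarrow> {?ys!i, ?ys!Suc i} \<in> T"
    proof (intro allI impI)
      fix i assume i: "Suc i < length ?ys"
      show "{?ys!i, ?ys!Suc i} \<in> T"
      proof (cases "Suc i < length xs")
        case True then show ?thesis using xs(5) by (simp add: nth_append)
      next
        case False
        then have "Suc i = length xs" using i by simp
        then have "?ys!i = b" "?ys!Suc i = c" using xs(1,3)
          by (auto simp: nth_append last_conv_nth intro!: arg_cong[where f="(!) xs"])
        then show ?thesis using step(2) by simp
      qed
    qed
    ultimately show ?thesis by blast
  qed
qed

lemma acyclic_bridge: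
  assumes "acyclic_edges T" "{x, y} \<in> T" "x \<noteq> y"
  shows "\<not> (adj (T - {{x, y}}))\<^sup>*\<^sup>* y x"
proof
  assume w: "(adj (T - {{x, y}}))\<^sup>*\<^sup>* y x"
  obtain xs where xs: "xs \<noteq> []" "hd xs = y" "last xs = x" "distinct xs"
    "\<forall>i. Suc i < length xs \<longrightarrow> {xs!i, xs!Suc i} \<in> T - {{x, y}}"
    using walk_path[OF w] by blast
  have h0: "xs!0 = y" using xs(1,2) by (simp add: hd_conv_nth)
  have hl: "xs!(length xs - 1) = x" using xs(1,3) by (simp add: last_conv_nth)
  have "length xs \<noteq> 1" using h0 hl assms(3) by auto
  moreover have "length xs \<noteq> 2"
  proof
    assume "length xs = 2"
    then have "{xs!0, xs!1} \<in> T - {{x,y}}" using xs(5) by auto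
    moreover have "xs!1 = x" using hl \<open>length xs = 2\<close> by simp
    moreover have "{y, x} = {x, y}" by blast
    ultimately show False using h0 by simp
  qed
  ultimately have len: "length xs \<ge> 3" using xs(1) by (cases "length xs") auto
  have "is_cycle T xs"
    unfolding is_cycle_def
  proof (intro conjI allI impI)
    show "3 \<le> length xs" by (rule len)
    show "distinct xs" by (rule xs(4))
    fix i assume i: "i < length xs"
    show "{xs ! i, xs ! ((i + 1) mod length xs)} \<in> T"
    proof (cases "Suc i < length xs")
      case True then show ?thesis using xs(5) by simp
    next
      case False
      then have si: "Suc i = length xs" using i by simp
      then have "i = length xs - 1" "(i + 1) mod length xs = 0" by auto
      moreover have "{x, y} = {y, x}" by blast
      ultimately show ?thesis using h0 hl assms(2) by simp
    qed
  qed
  then show False using assms(1) unfolding acyclic_edges_def by blast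
qed

lemma cycle_reroute:
  assumes "is_cycle T xs"
  shows "(adj (T - {{xs!0, xs!1}}))\<^sup>*\<^sup>* (xs!1) (xs!0)"
proof -
  let ?n = "length xs"
  have n: "?n \<ge> 3" and d: "distinct xs" and e: "\<And>i. i < ?n \<Longrightarrow> {xs!i, xs!((i+1) mod ?n)} \<in> T"
    using assms unfolding is_cycle_def by auto
  have walk: "(adj (T - {{xs!0, xs!1}}))\<^sup>*\<^sup>* (xs!1) (xs!k)" if "1 \<le> k" "k < ?n" for k
    using that
  proof (induction k)
    case 0 then show ?case by simp
  next
    case (Suc k)
    show ?case
    proof (cases "k = 0")
      case True then show ?thesis by simp
    next
      case False
      have IH: "(adj (T - {{xs!0, xs!1}}))\<^sup>*\<^sup>* (xs!1) (xs!k)" using Suc False by simp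
      have "{xs!k, xs!Suc k} \<in> T" using e[of k] Suc.prems by simp
      moreover have "{xs!k, xs!Suc k} \<noteq> {xs!0, xs!1}"
      proof
        assume eq: "{xs!k, xs!Suc k} = {xs!0, xs!1}"
        have "xs!k \<noteq> xs!0" using d False Suc.prems by (subst nth_eq_iff_index_eq) auto
        then have "xs!k = xs!1" using eq by (auto simp: doubleton_eq_iff)
        then have "k = 1" using d Suc.prems by (simp add: nth_eq_iff_index_eq)
        then have "xs!2 \<in> {xs!0, xs!1}" using eq by (auto simp: doubleton_eq_iff numeral_2_eq_2)
        moreover have "xs!2 \<noteq> xs!0" by (rule distinct_nth_neq[OF d]) (use n in auto)
        moreover have "xs!2 \<noteq> xs!1" by (rule distinct_nth_neq[OF d]) (use n in auto)
        ultimately show False by auto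
      qed
      ultimately show ?thesis using IH by (auto intro: rtranclp.rtrancl_into_rtrancl)
    qed
  qed
  have w1: "(adj (T - {{xs!0, xs!1}}))\<^sup>*\<^sup>* (xs!1) (xs!(?n - 1))" using walk[of "?n - 1"] n by simp
  obtain m where m: "?n = Suc m" using n by (cases "?n") auto
  have "{xs!(?n - 1), xs!0} \<in> T" using e[of m] m by simp
  moreover have "{xs!(?n - 1), xs!0} \<noteq> {xs!0, xs!1}"
  proof
    assume eq: "{xs!(?n - 1), xs!0} = {xs!0, xs!1}"
    have "xs!(?n - 1) \<noteq> xs!0" by (rule distinct_nth_neq[OF d]) (use n in auto)
    then have "xs!(?n - 1) = xs!1" using eq by (auto simp: doubleton_eq_iff)
    moreover have "xs!(?n - 1) \<noteq> xs!1" by (rule distinct_nth_neq[OF d]) (use n in auto)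
    ultimately show False by simp
  qed
  ultimately show ?thesis using w1 by (auto intro: rtranclp.rtrancl_into_rtrancl)
qed

locale rooted =
  fixes V :: "'a set" and T :: "'a set set" and r :: 'a
  assumes finV: "finite V" and rV: "r \<in> V" and conn: "connected_on V T"
    and gr: "graph V T"
begin

definition d :: "'a \<Rightarrow> nat" where "d x = (LEAST n. ((adj T) ^^ n) x r)"
definition nxt :: "'a \<Rightarrow> 'a" where "nxt x = (SOME y. adj T x y \<and> d y < d x)"

lemma edge_in: "{a, b} \<in> T \<Longrightarrow> a \<in> V \<and> b \<in> V \<and> a \<noteq> b"
  using gr unfolding graph_def by (fastforce simp: doubleton_eq_iff)

lemma finT: "finite T"
proof -
  have "T \<subseteq> Pow V" using gr unfolding graph_def by auto
  then show ?thesis using finV by (meson finite_Pow_iff finite_subset)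
qed

lemma d_ex: "x \<in> V \<Longrightarrow> ((adj T) ^^ d x) x r"
proof -
  assume "x \<in> V"
  then have "(adj T)\<^sup>*\<^sup>* x r" using conn rV unfolding connected_on_def by blast
  then have "\<exists>n. ((adj T) ^^ n) x r" by (rule rtranclp_imp_relpowp)
  then obtain n where "((adj T) ^^ n) x r" by blast
  then show ?thesis unfolding d_def by (rule LeastI)
qed

lemma nxt: assumes "x \<in> V" "x \<noteq> r" shows "adj T x (nxt x)" "d (nxt x) < d x"
proof -
  have p: "((adj T) ^^ d x) x r" using d_ex assms(1) .
  have "d x \<noteq> 0"
  proof
    assume "d x = 0"
    then have "((adj T) ^^ 0) x r" using p by simp
    then have "x = r" by (rule relpowp_0_E)
    then show False using assms(2) by simp
  qed
  then obtain k where k: "d x = Suc k" by (cases "d x") auto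
  have "((adj T) ^^ Suc k) x r" using p k by simp
  then obtain y where y: "adj T x y" "((adj T) ^^ k) y r" by (rule relpowp_Suc_E2)
  have "d y \<le> k" unfolding d_def using y(2) by (rule Least_le)
  then have "adj T x y \<and> d y < d x" using y k by simp
  then have "adj T x (nxt x) \<and> d (nxt x) < d x" unfolding nxt_def by (rule someI)
  then show "adj T x (nxt x)" "d (nxt x) < d x" by auto
qed

lemma inj_nxt: "inj_on (\<lambda>x. {x, nxt x}) (V - {r})"
proof (rule inj_onI)
  fix x y assume x: "x \<in> V - {r}" and y: "y \<in> V - {r}" and eq: "{x, nxt x} = {y, nxt y}"
  show "x = y"
  proof (rule ccontr)
    assume "x \<noteq> y"
    then have "x = nxt y" "y = nxt x" using eq by (auto simp: doubleton_eq_iff)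
    then show False using nxt(2)[of x] nxt(2)[of y] x y by auto
  qed
qed

lemma card_lower: "card V \<le> card T + 1"
proof -
  have "(\<lambda>x. {x, nxt x}) ` (V - {r}) \<subseteq> T" using nxt(1) by auto
  then have "card (V - {r}) \<le> card T" using inj_nxt finT by (metis card_inj_on_le)
  then show ?thesis using rV finV by simp
qed

lemma card_upper:
  assumes ac: "acyclic_edges T"
  shows "card T + 1 \<le> card V"
proof -
  have "T \<subseteq> (\<lambda>x. {x, nxt x}) ` (V - {r})"
  proof
    fix e assume e: "e \<in> T"
    then obtain a b where ab: "a \<in> V" "b \<in> V" "a \<noteq> b" "e = {a, b}" using gr unfolding graph_def by blast
    show "e \<in> (\<lambda>x. {x, nxt x}) ` (V - {r})"
    proof (rule ccontr)
      assume nin: "e \<notin> (\<lambda>x. {x, nxt x}) ` (V - {r})"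
      have na: "\<not> (a \<noteq> r \<and> nxt a = b)" using nin ab by auto
      have nb: "\<not> (b \<noteq> r \<and> nxt b = a)"
      proof
        assume "b \<noteq> r \<and> nxt b = a"
        then have "{b, nxt b} \<in> (\<lambda>x. {x, nxt x}) ` (V - {r})" using ab by auto
        moreover have "{b, nxt b} = e" using ab(4) \<open>b \<noteq> r \<and> nxt b = a\<close> by blast
        ultimately show False using nin by simp
      qed
      have reach: "c \<in> V \<Longrightarrow> (adj (T - {{a, b}}))\<^sup>*\<^sup>* c r" for c
      proof (induction "d c" arbitrary: c rule: less_induct)
        case less
        show ?case
        proof (cases "c = r")
          case True then show ?thesis by simp
        next
          case False
          have s: "adj T c (nxt c)" "d (nxt c) < d c" using nxt[OF less.prems False] by auto
          have nV: "nxt c \<in> V" using edge_in[OF s(1)] by blast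
          have "{c, nxt c} \<noteq> {a, b}"
          proof
            assume "{c, nxt c} = {a, b}"
            then have "(c = a \<and> nxt c = b) \<or> (c = b \<and> nxt c = a)" by (auto simp: doubleton_eq_iff)
            then show False using na nb False by auto
          qed
          then have "adj (T - {{a, b}}) c (nxt c)" using s(1) by simp
          moreover have "(adj (T - {{a, b}}))\<^sup>*\<^sup>* (nxt c) r" using less.hyps[OF s(2) nV] .
          ultimately show ?thesis by (rule converse_rtranclp_into_rtranclp)
        qed
      qed
      have "(adj (T - {{a, b}}))\<^sup>*\<^sup>* b a"
        using reach[OF ab(2)] adj_sym[OF reach[OF ab(1)]] by (rule rtranclp_trans)
      moreover have "\<not> (adj (T - {{a, b}}))\<^sup>*\<^sup>* b a" using acyclic_bridge[OF ac] e ab by blast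
      ultimately show False by contradiction
    qed
  qed
  then have "card T \<le> card ((\<lambda>x. {x, nxt x}) ` (V - {r}))"
    using finV by (intro card_mono) auto
  also have "\<dots> \<le> card (V - {r})" by (rule card_image_le) (use finV in auto)
  finally have "card T \<le> card (V - {r})" .
  moreover have "card V > 0" using rV finV by (auto simp: card_gt_0_iff)
  moreover have "card (V - {r}) = card V - 1" using rV by (simp add: card_Diff_singleton)
  ultimately show ?thesis by linarith
qed

end

lemma tree_card:
  assumes "finite V" "r \<in> V" "spanning_tree V E T" "graph V E"
  shows "card T + 1 \<le> card V"
proof -
  have "graph V T" using assms(3,4) unfolding spanning_tree_def graph_def by auto
  then interpret rooted V T r using assms unfolding spanning_tree_def by unfold_locales auto
  show ?thesis using card_upper assms(3) unfolding spanning_tree_def by auto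
qed

lemma conn_acyclic:
  assumes "finite V" "r \<in> V" "connected_on V T" "graph V T" "card T + 1 \<le> card V"
  shows "acyclic_edges T"
  unfolding acyclic_edges_def
proof
  assume "\<exists>xs. is_cycle T xs"
  then obtain xs where c: "is_cycle T xs" by blast
  let ?e = "{xs!0, xs!1}"
  have c3: "length xs \<ge> 3" and ce: "\<forall>i < length xs. {xs ! i, xs ! ((i + 1) mod length xs)} \<in> T"
    using c unfolding is_cycle_def by auto
  have "xs \<noteq> []" using c3 by auto
  then have eT: "?e \<in> T" using ce[rule_format, of 0] c3 by simp
  have "connected_on V (T - {?e})"
    unfolding connected_on_def
  proof (intro ballI)
    fix x y assume "x \<in> V" "y \<in> V"
    then have w: "(adj T)\<^sup>*\<^sup>* x y" using assms(3) unfolding connected_on_def by blast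
    show "(adj (T - {?e}))\<^sup>*\<^sup>* x y"
    proof (rule walk_mono[OF _ w])
      fix a b assume ab: "adj T a b"
      show "(adj (T - {?e}))\<^sup>*\<^sup>* a b"
      proof (cases "{a, b} = ?e")
        case False
        then have "adj (T - {?e}) a b" using ab by simp
        then show ?thesis by (rule r_into_rtranclp)
      next
        case True
        then have ab2: "(a = xs!0 \<and> b = xs!1) \<or> (a = xs!1 \<and> b = xs!0)" by (auto simp: doubleton_eq_iff)
        have w10: "(adj (T - {?e}))\<^sup>*\<^sup>* (xs!1) (xs!0)" by (rule cycle_reroute[OF c])
        have w01: "(adj (T - {?e}))\<^sup>*\<^sup>* (xs!0) (xs!1)" using adj_sym w10 .
        from ab2 show ?thesis
        proof (elim disjE conjE)
          assume "a = xs!0" "b = xs!1" then show ?thesis using w01 by simp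
        next
          assume "a = xs!1" "b = xs!0" then show ?thesis using w10 by simp
        qed
      qed
    qed
  qed
  moreover have "graph V (T - {?e})" using assms(4) unfolding graph_def by auto
  ultimately interpret rooted V "T - {?e}" r using assms by unfold_locales auto
  have "card V \<le> card (T - {?e}) + 1" by (rule card_lower)
  have fT: "finite T" using finT by simp
  have "card T > 0" using fT eT by (auto simp: card_gt_0_iff)
  moreover note \<open>card V \<le> card (T - {?e}) + 1\<close>
  moreover have "card (T - {?e}) = card T - 1" using eT by (simp add: card_Diff_singleton)
  ultimately show False using assms(5) by linarith
qed

lemma degree_insert:
  assumes f: "finite A"
  shows "degree (insert e A) v = (if v \<in> e \<and> e \<notin> A then Suc (degree A v) else degree A v)"
proof (cases "v \<in> e")
  case True
  have "{x \<in> insert e A. v \<in> x} = insert e {x \<in> A. v \<in> x}" using True by auto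
  then show ?thesis using True f by (simp add: card_insert_if degree_def)
next
  case False
  have "{x \<in> insert e A. v \<in> x} = {x \<in> A. v \<in> x}" using False by auto
  then show ?thesis using False by (simp add: degree_def)
qed

lemma degree_empty: "degree {} v = 0" unfolding degree_def by simp

definition filt :: "('b \<Rightarrow> bool) \<Rightarrow> 'b set \<Rightarrow> 'b set" where "filt P A = {e \<in> A. P e}"
lemma filt_insert: "filt P (insert a A) = (if P a then insert a (filt P A) else filt P A)"
  unfolding filt_def by auto
lemma filt_empty: "filt P {} = {}" unfolding filt_def by auto

lemma compr5: "{f i | i::nat. i < 5} = {f 0, f 1, f 2, f 3, f 4}"
  by (auto simp: less_Suc_eq numeral_eq_Suc)

lemma P_edges_eq: "P_edges = {{5,7},{6,8},{7,9},{8,5},{9,6},{1,6},{2,7},{3,8},{4,9},{1,2},{2,3},{3,4}}"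
proof -
  have o: "{{i, (i + 1) mod 5} | i::nat. i < 5} = {{0,1},{1,2},{2,3},{3,4},{4,0}}"
  proof -
    have "{(1::nat), (1 + 1) mod 5} = {1, 2}" by (simp add: numeral_2_eq_2)
    then show ?thesis unfolding compr5[of "\<lambda>i. {i, (i + 1) mod 5}"] by simp
  qed
  have s: "{{i, i + 5} | i::nat. i < 5} = {{0,5},{1,6},{2,7},{3,8},{4,9}}"
    unfolding compr5[of "\<lambda>i. {i, i + 5}"] by simp
  have n: "{{i + 5, (i + 2) mod 5 + 5} | i::nat. i < 5} = {{5,7},{6,8},{7,9},{8,5},{9,6}}"
    unfolding compr5[of "\<lambda>i. {i + 5, (i + 2) mod 5 + 5}"] by simp
  have "P_edges = filt (\<lambda>e. 0 \<notin> e) petersen_edges" unfolding P_edges_def filt_def by simp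
  then show ?thesis unfolding petersen_edges_def o s n by (simp add: filt_insert filt_empty)
qed

lemma P_deg: "{p \<in> P_verts. degree P_edges p = 2} = {1,4,5}"
proof -
  have pv: "P_verts = {1,2,3,4,5,6,7,8,9}" unfolding P_verts_def by auto
  show ?thesis unfolding pv P_edges_eq
    by (simp add: degree_insert degree_empty doubleton_eq_iff) auto
qed

lemma step_root: "{a, b} \<in> T \<Longrightarrow> (adj T)\<^sup>*\<^sup>* b r \<Longrightarrow> (adj T)\<^sup>*\<^sup>* a r"
  by (rule converse_rtranclp_into_rtranclp)

lemma conn_root:
  assumes "\<And>a. a \<in> S \<Longrightarrow> (adj T)\<^sup>*\<^sup>* a r"
  shows "connected_on S T"
  unfolding connected_on_def
proof (intro ballI)
  fix x y assume "x \<in> S" "y \<in> S"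
  then have "(adj T)\<^sup>*\<^sup>* x r" "(adj T)\<^sup>*\<^sup>* r y" using assms adj_sym[OF assms] by auto
  then show "(adj T)\<^sup>*\<^sup>* x y" by (rule rtranclp_trans)
qed

lemma pv: "P_verts = {1,2,3,4,5,6,7,8,9}" unfolding P_verts_def by auto

lemma cfgA: "\<exists>TP MP. TP \<union> {} \<union> MP = P_edges \<and> TP \<inter> {} = {} \<and> TP \<inter> MP = {} \<and> {} \<inter> MP = {} \<and>
  (\<forall>e\<in>MP. \<forall>f\<in>MP. e \<noteq> f \<longrightarrow> e \<inter> f = {}) \<and> connected_on P_verts TP \<and> card TP = 8"
proof -
  define TP :: "nat set set" where "TP = {{2,3},{1,6},{2,7},{3,8},{4,9},{7,9},{8,5},{9,6}}"
  define MP :: "nat set set" where "MP = {{1,2},{3,4},{5,7},{6,8}}"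
  have TP_1: "(adj TP)\<^sup>*\<^sup>* 1 1" by simp
  have TP_6: "(adj TP)\<^sup>*\<^sup>* 6 1" by (rule step_root[OF _ TP_1]) (simp add: TP_def doubleton_eq_iff)
  have TP_9: "(adj TP)\<^sup>*\<^sup>* 9 1" by (rule step_root[OF _ TP_6]) (simp add: TP_def doubleton_eq_iff)
  have TP_4: "(adj TP)\<^sup>*\<^sup>* 4 1" by (rule step_root[OF _ TP_9]) (simp add: TP_def doubleton_eq_iff)
  have TP_7: "(adj TP)\<^sup>*\<^sup>* 7 1" by (rule step_root[OF _ TP_9]) (simp add: TP_def doubleton_eq_iff)
  have TP_2: "(adj TP)\<^sup>*\<^sup>* 2 1" by (rule step_root[OF _ TP_7]) (simp add: TP_def doubleton_eq_iff)
  have TP_3: "(adj TP)\<^sup>*\<^sup>* 3 1" by (rule step_root[OF _ TP_2]) (simp add: TP_def doubleton_eq_iff)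
  have TP_8: "(adj TP)\<^sup>*\<^sup>* 8 1" by (rule step_root[OF _ TP_3]) (simp add: TP_def doubleton_eq_iff)
  have TP_5: "(adj TP)\<^sup>*\<^sup>* 5 1" by (rule step_root[OF _ TP_8]) (simp add: TP_def doubleton_eq_iff)
  have c: "connected_on P_verts TP" by (rule conn_root[of _ _ 1]) (use TP_1 TP_6 TP_9 TP_4 TP_7 TP_2 TP_3 TP_8 TP_5 in \<open>auto simp: pv\<close>)
  have "TP \<union> {} \<union> MP = P_edges" unfolding P_edges_eq TP_def MP_def by (auto simp: doubleton_eq_iff)
  moreover have "TP \<inter> MP = {}" unfolding TP_def MP_def by (auto simp: doubleton_eq_iff)
  moreover have "\<forall>e\<in>MP. \<forall>f\<in>MP. e \<noteq> f \<longrightarrow> e \<inter> f = {}" unfolding MP_def by (simp add: doubleton_eq_iff)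
  moreover have "card TP = 8" unfolding TP_def by (simp add: doubleton_eq_iff)
  ultimately show ?thesis using c by blast
qed

lemma cfgB1: "\<exists>TP CP. TP \<union> CP \<union> {} = P_edges \<and> TP \<inter> CP = {} \<and> TP \<inter> {} = {} \<and> CP \<inter> {} = {} \<and>
  (\<forall>a\<in>\<Union>CP. degree CP a = 2) \<and> card TP = 7 \<and> (\<forall>a\<in>P_verts. \<exists>p\<in>{1,4,5}. (adj TP)\<^sup>*\<^sup>* a p) \<and>
  (\<forall>p\<in>{1,4,5}-{1}. \<forall>p'\<in>{1,4,5}-{1}. (adj TP)\<^sup>*\<^sup>* p p')"
proof -
  define TP :: "nat set set" where "TP = {{5,7},{6,8},{8,5},{3,8},{4,9},{2,3},{3,4}}"
  define CP :: "nat set set" where "CP = {{1,2},{2,7},{7,9},{9,6},{1,6}}"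
  have TP_4: "(adj TP)\<^sup>*\<^sup>* 4 4" by simp
  have TP_9: "(adj TP)\<^sup>*\<^sup>* 9 4" by (rule step_root[OF _ TP_4]) (simp add: TP_def doubleton_eq_iff)
  have TP_3: "(adj TP)\<^sup>*\<^sup>* 3 4" by (rule step_root[OF _ TP_4]) (simp add: TP_def doubleton_eq_iff)
  have TP_8: "(adj TP)\<^sup>*\<^sup>* 8 4" by (rule step_root[OF _ TP_3]) (simp add: TP_def doubleton_eq_iff)
  have TP_2: "(adj TP)\<^sup>*\<^sup>* 2 4" by (rule step_root[OF _ TP_3]) (simp add: TP_def doubleton_eq_iff)
  have TP_6: "(adj TP)\<^sup>*\<^sup>* 6 4" by (rule step_root[OF _ TP_8]) (simp add: TP_def doubleton_eq_iff)
  have TP_5: "(adj TP)\<^sup>*\<^sup>* 5 4" by (rule step_root[OF _ TP_8]) (simp add: TP_def doubleton_eq_iff)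
  have TP_7: "(adj TP)\<^sup>*\<^sup>* 7 4" by (rule step_root[OF _ TP_5]) (simp add: TP_def doubleton_eq_iff)
  have TPm: "(adj TP)\<^sup>*\<^sup>* 1 1" by simp
  have a1: "\<forall>a\<in>P_verts. \<exists>p\<in>{1,4,5}. (adj TP)\<^sup>*\<^sup>* a p" unfolding P_verts_def
  proof
    fix a :: nat assume "a \<in> {1..9}"
    then have "a = 1 \<or> a \<in> {4,9,3,8,2,6,5,7}" by auto
    then show "\<exists>p\<in>{1,4,5}. (adj TP)\<^sup>*\<^sup>* a p" using TPm TP_4 TP_9 TP_3 TP_8 TP_2 TP_6 TP_5 TP_7 by auto
  qed
  have a2: "\<forall>p\<in>{1,4,5}-{1}. \<forall>p'\<in>{1,4,5}-{1}. (adj TP)\<^sup>*\<^sup>* p p'" using TP_4 TP_5 adj_sym[OF TP_5] by auto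
  have "TP \<union> CP \<union> {} = P_edges" unfolding P_edges_eq TP_def CP_def by (auto simp: doubleton_eq_iff)
  moreover have "TP \<inter> CP = {}" unfolding TP_def CP_def by (auto simp: doubleton_eq_iff)
  moreover have "\<forall>a\<in>\<Union>CP. degree CP a = 2" unfolding CP_def by (simp add: degree_insert degree_empty doubleton_eq_iff)
  moreover have "card TP = 7" unfolding TP_def by (simp add: doubleton_eq_iff)
  ultimately show ?thesis using a1 a2 by blast
qed

lemma cfgB4: "\<exists>TP CP. TP \<union> CP \<union> {} = P_edges \<and> TP \<inter> CP = {} \<and> TP \<inter> {} = {} \<and> CP \<inter> {} = {} \<and>
  (\<forall>a\<in>\<Union>CP. degree CP a = 2) \<and> card TP = 7 \<and> (\<forall>a\<in>P_verts. \<exists>p\<in>{1,4,5}. (adj TP)\<^sup>*\<^sup>* a p) \<and>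
  (\<forall>p\<in>{1,4,5}-{4}. \<forall>p'\<in>{1,4,5}-{4}. (adj TP)\<^sup>*\<^sup>* p p')"
proof -
  define TP :: "nat set set" where "TP = {{5,7},{7,9},{8,5},{1,6},{2,7},{1,2},{2,3}}"
  define CP :: "nat set set" where "CP = {{3,4},{3,8},{6,8},{9,6},{4,9}}"
  have TP_1: "(adj TP)\<^sup>*\<^sup>* 1 1" by simp
  have TP_6: "(adj TP)\<^sup>*\<^sup>* 6 1" by (rule step_root[OF _ TP_1]) (simp add: TP_def doubleton_eq_iff)
  have TP_2: "(adj TP)\<^sup>*\<^sup>* 2 1" by (rule step_root[OF _ TP_1]) (simp add: TP_def doubleton_eq_iff)
  have TP_7: "(adj TP)\<^sup>*\<^sup>* 7 1" by (rule step_root[OF _ TP_2]) (simp add: TP_def doubleton_eq_iff)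
  have TP_3: "(adj TP)\<^sup>*\<^sup>* 3 1" by (rule step_root[OF _ TP_2]) (simp add: TP_def doubleton_eq_iff)
  have TP_5: "(adj TP)\<^sup>*\<^sup>* 5 1" by (rule step_root[OF _ TP_7]) (simp add: TP_def doubleton_eq_iff)
  have TP_9: "(adj TP)\<^sup>*\<^sup>* 9 1" by (rule step_root[OF _ TP_7]) (simp add: TP_def doubleton_eq_iff)
  have TP_8: "(adj TP)\<^sup>*\<^sup>* 8 1" by (rule step_root[OF _ TP_5]) (simp add: TP_def doubleton_eq_iff)
  have TPm: "(adj TP)\<^sup>*\<^sup>* 4 4" by simp
  have a1: "\<forall>a\<in>P_verts. \<exists>p\<in>{1,4,5}. (adj TP)\<^sup>*\<^sup>* a p" unfolding P_verts_def
  proof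
    fix a :: nat assume "a \<in> {1..9}"
    then have "a = 4 \<or> a \<in> {1,6,2,7,3,5,9,8}" by auto
    then show "\<exists>p\<in>{1,4,5}. (adj TP)\<^sup>*\<^sup>* a p" using TPm TP_1 TP_6 TP_2 TP_7 TP_3 TP_5 TP_9 TP_8 by auto
  qed
  have a2: "\<forall>p\<in>{1,4,5}-{4}. \<forall>p'\<in>{1,4,5}-{4}. (adj TP)\<^sup>*\<^sup>* p p'" using TP_1 TP_5 adj_sym[OF TP_5] by auto
  have "TP \<union> CP \<union> {} = P_edges" unfolding P_edges_eq TP_def CP_def by (auto simp: doubleton_eq_iff)
  moreover have "TP \<inter> CP = {}" unfolding TP_def CP_def by (auto simp: doubleton_eq_iff)
  moreover have "\<forall>a\<in>\<Union>CP. degree CP a = 2" unfolding CP_def by (simp add: degree_insert degree_empty doubleton_eq_iff)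
  moreover have "card TP = 7" unfolding TP_def by (simp add: doubleton_eq_iff)
  ultimately show ?thesis using a1 a2 by blast
qed

lemma cfgB5: "\<exists>TP CP. TP \<union> CP \<union> {} = P_edges \<and> TP \<inter> CP = {} \<and> TP \<inter> {} = {} \<and> CP \<inter> {} = {} \<and>
  (\<forall>a\<in>\<Union>CP. degree CP a = 2) \<and> card TP = 7 \<and> (\<forall>a\<in>P_verts. \<exists>p\<in>{1,4,5}. (adj TP)\<^sup>*\<^sup>* a p) \<and>
  (\<forall>p\<in>{1,4,5}-{5}. \<forall>p'\<in>{1,4,5}-{5}. (adj TP)\<^sup>*\<^sup>* p p')"
proof -
  define TP :: "nat set set" where "TP = {{6,8},{7,9},{9,6},{1,6},{4,9},{1,2},{3,4}}"
  define CP :: "nat set set" where "CP = {{5,7},{2,7},{2,3},{3,8},{8,5}}"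
  have TP_1: "(adj TP)\<^sup>*\<^sup>* 1 1" by simp
  have TP_6: "(adj TP)\<^sup>*\<^sup>* 6 1" by (rule step_root[OF _ TP_1]) (simp add: TP_def doubleton_eq_iff)
  have TP_2: "(adj TP)\<^sup>*\<^sup>* 2 1" by (rule step_root[OF _ TP_1]) (simp add: TP_def doubleton_eq_iff)
  have TP_8: "(adj TP)\<^sup>*\<^sup>* 8 1" by (rule step_root[OF _ TP_6]) (simp add: TP_def doubleton_eq_iff)
  have TP_9: "(adj TP)\<^sup>*\<^sup>* 9 1" by (rule step_root[OF _ TP_6]) (simp add: TP_def doubleton_eq_iff)
  have TP_7: "(adj TP)\<^sup>*\<^sup>* 7 1" by (rule step_root[OF _ TP_9]) (simp add: TP_def doubleton_eq_iff)
  have TP_4: "(adj TP)\<^sup>*\<^sup>* 4 1" by (rule step_root[OF _ TP_9]) (simp add: TP_def doubleton_eq_iff)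
  have TP_3: "(adj TP)\<^sup>*\<^sup>* 3 1" by (rule step_root[OF _ TP_4]) (simp add: TP_def doubleton_eq_iff)
  have TPm: "(adj TP)\<^sup>*\<^sup>* 5 5" by simp
  have a1: "\<forall>a\<in>P_verts. \<exists>p\<in>{1,4,5}. (adj TP)\<^sup>*\<^sup>* a p" unfolding P_verts_def
  proof
    fix a :: nat assume "a \<in> {1..9}"
    then have "a = 5 \<or> a \<in> {1,6,2,8,9,7,4,3}" by auto
    then show "\<exists>p\<in>{1,4,5}. (adj TP)\<^sup>*\<^sup>* a p" using TPm TP_1 TP_6 TP_2 TP_8 TP_9 TP_7 TP_4 TP_3 by auto
  qed
  have a2: "\<forall>p\<in>{1,4,5}-{5}. \<forall>p'\<in>{1,4,5}-{5}. (adj TP)\<^sup>*\<^sup>* p p'" using TP_1 TP_4 adj_sym[OF TP_4] by auto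
  have "TP \<union> CP \<union> {} = P_edges" unfolding P_edges_eq TP_def CP_def by (auto simp: doubleton_eq_iff)
  moreover have "TP \<inter> CP = {}" unfolding TP_def CP_def by (auto simp: doubleton_eq_iff)
  moreover have "\<forall>a\<in>\<Union>CP. degree CP a = 2" unfolding CP_def by (simp add: degree_insert degree_empty doubleton_eq_iff)
  moreover have "card TP = 7" unfolding TP_def by (simp add: doubleton_eq_iff)
  ultimately show ?thesis using a1 a2 by blast
qed

lemma cfgC14: "\<exists>TP CP MP. TP \<union> CP \<union> MP = P_edges \<and> TP \<inter> CP = {} \<and> TP \<inter> MP = {} \<and> CP \<inter> MP = {} \<and>
  (\<forall>e\<in>MP. \<forall>f\<in>MP. e \<noteq> f \<longrightarrow> e \<inter> f = {}) \<and> connected_on P_verts TP \<and> card TP = 8 \<and>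
  (\<forall>c\<in>\<Union>CP \<union> {1,4}. degree CP c + (if c \<in> {1,4} then 1 else 0) = 2)"
proof -
  define TP :: "nat set set" where "TP = {{6,8},{7,9},{8,5},{9,6},{1,6},{2,7},{3,8},{4,9}}"
  define CP :: "nat set set" where "CP = {{1,2},{2,3},{3,4}}"
  define MP :: "nat set set" where "MP = {{5,7}}"
  have TP_1: "(adj TP)\<^sup>*\<^sup>* 1 1" by simp
  have TP_6: "(adj TP)\<^sup>*\<^sup>* 6 1" by (rule step_root[OF _ TP_1]) (simp add: TP_def doubleton_eq_iff)
  have TP_8: "(adj TP)\<^sup>*\<^sup>* 8 1" by (rule step_root[OF _ TP_6]) (simp add: TP_def doubleton_eq_iff)
  have TP_9: "(adj TP)\<^sup>*\<^sup>* 9 1" by (rule step_root[OF _ TP_6]) (simp add: TP_def doubleton_eq_iff)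
  have TP_5: "(adj TP)\<^sup>*\<^sup>* 5 1" by (rule step_root[OF _ TP_8]) (simp add: TP_def doubleton_eq_iff)
  have TP_3: "(adj TP)\<^sup>*\<^sup>* 3 1" by (rule step_root[OF _ TP_8]) (simp add: TP_def doubleton_eq_iff)
  have TP_7: "(adj TP)\<^sup>*\<^sup>* 7 1" by (rule step_root[OF _ TP_9]) (simp add: TP_def doubleton_eq_iff)
  have TP_4: "(adj TP)\<^sup>*\<^sup>* 4 1" by (rule step_root[OF _ TP_9]) (simp add: TP_def doubleton_eq_iff)
  have TP_2: "(adj TP)\<^sup>*\<^sup>* 2 1" by (rule step_root[OF _ TP_7]) (simp add: TP_def doubleton_eq_iff)
  have c: "connected_on P_verts TP" by (rule conn_root[of _ _ 1]) (use TP_1 TP_6 TP_8 TP_9 TP_5 TP_3 TP_7 TP_4 TP_2 in \<open>auto simp: pv\<close>)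
  have "TP \<union> CP \<union> MP = P_edges" unfolding P_edges_eq TP_def CP_def MP_def by (auto simp: doubleton_eq_iff)
  moreover have "TP \<inter> CP = {}" unfolding TP_def CP_def by (auto simp: doubleton_eq_iff)
  moreover have "TP \<inter> MP = {}" unfolding TP_def MP_def by (auto simp: doubleton_eq_iff)
  moreover have "CP \<inter> MP = {}" unfolding CP_def MP_def by (auto simp: doubleton_eq_iff)
  moreover have "\<forall>e\<in>MP. \<forall>f\<in>MP. e \<noteq> f \<longrightarrow> e \<inter> f = {}" unfolding MP_def by (simp add: doubleton_eq_iff)
  moreover have "card TP = 8" unfolding TP_def by (simp add: doubleton_eq_iff)
  moreover have "\<forall>c\<in>\<Union>CP \<union> {1,4}. degree CP c + (if c \<in> {1,4} then 1 else 0) = 2" unfolding CP_def by (simp add: degree_insert degree_empty doubleton_eq_iff)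
  ultimately show ?thesis using c by blast
qed

lemma cfgC15: "\<exists>TP CP MP. TP \<union> CP \<union> MP = P_edges \<and> TP \<inter> CP = {} \<and> TP \<inter> MP = {} \<and> CP \<inter> MP = {} \<and>
  (\<forall>e\<in>MP. \<forall>f\<in>MP. e \<noteq> f \<longrightarrow> e \<inter> f = {}) \<and> connected_on P_verts TP \<and> card TP = 8 \<and>
  (\<forall>c\<in>\<Union>CP \<union> {1,5}. degree CP c + (if c \<in> {1,5} then 1 else 0) = 2)"
proof -
  define TP :: "nat set set" where "TP = {{5,7},{6,8},{7,9},{9,6},{1,6},{2,7},{4,9},{3,4}}"
  define CP :: "nat set set" where "CP = {{1,2},{2,3},{3,8},{8,5}}"
  define MP :: "nat set set" where "MP = {}"
  have TP_1: "(adj TP)\<^sup>*\<^sup>* 1 1" by simp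
  have TP_6: "(adj TP)\<^sup>*\<^sup>* 6 1" by (rule step_root[OF _ TP_1]) (simp add: TP_def doubleton_eq_iff)
  have TP_8: "(adj TP)\<^sup>*\<^sup>* 8 1" by (rule step_root[OF _ TP_6]) (simp add: TP_def doubleton_eq_iff)
  have TP_9: "(adj TP)\<^sup>*\<^sup>* 9 1" by (rule step_root[OF _ TP_6]) (simp add: TP_def doubleton_eq_iff)
  have TP_7: "(adj TP)\<^sup>*\<^sup>* 7 1" by (rule step_root[OF _ TP_9]) (simp add: TP_def doubleton_eq_iff)
  have TP_4: "(adj TP)\<^sup>*\<^sup>* 4 1" by (rule step_root[OF _ TP_9]) (simp add: TP_def doubleton_eq_iff)
  have TP_5: "(adj TP)\<^sup>*\<^sup>* 5 1" by (rule step_root[OF _ TP_7]) (simp add: TP_def doubleton_eq_iff)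
  have TP_2: "(adj TP)\<^sup>*\<^sup>* 2 1" by (rule step_root[OF _ TP_7]) (simp add: TP_def doubleton_eq_iff)
  have TP_3: "(adj TP)\<^sup>*\<^sup>* 3 1" by (rule step_root[OF _ TP_4]) (simp add: TP_def doubleton_eq_iff)
  have c: "connected_on P_verts TP" by (rule conn_root[of _ _ 1]) (use TP_1 TP_6 TP_8 TP_9 TP_7 TP_4 TP_5 TP_2 TP_3 in \<open>auto simp: pv\<close>)
  have "TP \<union> CP \<union> MP = P_edges" unfolding P_edges_eq TP_def CP_def MP_def by (auto simp: doubleton_eq_iff)
  moreover have "TP \<inter> CP = {}" unfolding TP_def CP_def by (auto simp: doubleton_eq_iff)
  moreover have "TP \<inter> MP = {}" unfolding TP_def MP_def by (auto simp: doubleton_eq_iff)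
  moreover have "CP \<inter> MP = {}" unfolding CP_def MP_def by (auto simp: doubleton_eq_iff)
  moreover have "\<forall>e\<in>MP. \<forall>f\<in>MP. e \<noteq> f \<longrightarrow> e \<inter> f = {}" unfolding MP_def by (simp add: doubleton_eq_iff)
  moreover have "card TP = 8" unfolding TP_def by (simp add: doubleton_eq_iff)
  moreover have "\<forall>c\<in>\<Union>CP \<union> {1,5}. degree CP c + (if c \<in> {1,5} then 1 else 0) = 2" unfolding CP_def by (simp add: degree_insert degree_empty doubleton_eq_iff)
  ultimately show ?thesis using c by blast
qed

lemma cfgC45: "\<exists>TP CP MP. TP \<union> CP \<union> MP = P_edges \<and> TP \<inter> CP = {} \<and> TP \<inter> MP = {} \<and> CP \<inter> MP = {} \<and>
  (\<forall>e\<in>MP. \<forall>f\<in>MP. e \<noteq> f \<longrightarrow> e \<inter> f = {}) \<and> connected_on P_verts TP \<and> card TP = 8 \<and>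
  (\<forall>c\<in>\<Union>CP \<union> {4,5}. degree CP c + (if c \<in> {4,5} then 1 else 0) = 2)"
proof -
  define TP :: "nat set set" where "TP = {{6,8},{7,9},{8,5},{9,6},{1,6},{3,8},{4,9},{1,2}}"
  define CP :: "nat set set" where "CP = {{3,4},{2,3},{2,7},{5,7}}"
  define MP :: "nat set set" where "MP = {}"
  have TP_1: "(adj TP)\<^sup>*\<^sup>* 1 1" by simp
  have TP_6: "(adj TP)\<^sup>*\<^sup>* 6 1" by (rule step_root[OF _ TP_1]) (simp add: TP_def doubleton_eq_iff)
  have TP_2: "(adj TP)\<^sup>*\<^sup>* 2 1" by (rule step_root[OF _ TP_1]) (simp add: TP_def doubleton_eq_iff)
  have TP_8: "(adj TP)\<^sup>*\<^sup>* 8 1" by (rule step_root[OF _ TP_6]) (simp add: TP_def doubleton_eq_iff)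
  have TP_9: "(adj TP)\<^sup>*\<^sup>* 9 1" by (rule step_root[OF _ TP_6]) (simp add: TP_def doubleton_eq_iff)
  have TP_5: "(adj TP)\<^sup>*\<^sup>* 5 1" by (rule step_root[OF _ TP_8]) (simp add: TP_def doubleton_eq_iff)
  have TP_3: "(adj TP)\<^sup>*\<^sup>* 3 1" by (rule step_root[OF _ TP_8]) (simp add: TP_def doubleton_eq_iff)
  have TP_7: "(adj TP)\<^sup>*\<^sup>* 7 1" by (rule step_root[OF _ TP_9]) (simp add: TP_def doubleton_eq_iff)
  have TP_4: "(adj TP)\<^sup>*\<^sup>* 4 1" by (rule step_root[OF _ TP_9]) (simp add: TP_def doubleton_eq_iff)
  have c: "connected_on P_verts TP" by (rule conn_root[of _ _ 1]) (use TP_1 TP_6 TP_2 TP_8 TP_9 TP_5 TP_3 TP_7 TP_4 in \<open>auto simp: pv\<close>)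
  have "TP \<union> CP \<union> MP = P_edges" unfolding P_edges_eq TP_def CP_def MP_def by (auto simp: doubleton_eq_iff)
  moreover have "TP \<inter> CP = {}" unfolding TP_def CP_def by (auto simp: doubleton_eq_iff)
  moreover have "TP \<inter> MP = {}" unfolding TP_def MP_def by (auto simp: doubleton_eq_iff)
  moreover have "CP \<inter> MP = {}" unfolding CP_def MP_def by (auto simp: doubleton_eq_iff)
  moreover have "\<forall>e\<in>MP. \<forall>f\<in>MP. e \<noteq> f \<longrightarrow> e \<inter> f = {}" unfolding MP_def by (simp add: doubleton_eq_iff)
  moreover have "card TP = 8" unfolding TP_def by (simp add: doubleton_eq_iff)
  moreover have "\<forall>c\<in>\<Union>CP \<union> {4,5}. degree CP c + (if c \<in> {4,5} then 1 else 0) = 2" unfolding CP_def by (simp add: degree_insert degree_empty doubleton_eq_iff)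
  ultimately show ?thesis using c by blast
qed

definition LI :: "'a set set \<Rightarrow> ('a + nat) set set" where "LI X = (`) Inl ` X"
definition RI :: "nat set set \<Rightarrow> ('a + nat) set set" where "RI X = (`) Inr ` X"
definition KI :: "('a \<times> nat) set \<Rightarrow> ('a + nat) set set" where
  "KI X = (\<lambda>q. {Inl (fst q), Inr (snd q)}) ` X"

lemma Inl_img_eq: "Inl ` a = Inl ` b \<longleftrightarrow> a = b"
  by (simp add: inj_image_eq_iff)
lemma Inr_img_eq: "Inr ` a = Inr ` b \<longleftrightarrow> a = b"
  by (simp add: inj_image_eq_iff)

lemma K_eq: "{Inl a, Inr b} = {Inl c, Inr d} \<longleftrightarrow> a = c \<and> b = d"
  by (auto simp: doubleton_eq_iff)

lemma inj_LI: "inj_on ((`) Inl) A" by (simp add: inj_on_def Inl_img_eq)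
lemma inj_RI: "inj_on ((`) Inr) A" by (simp add: inj_on_def Inr_img_eq)
lemma inj_KI: "inj_on (\<lambda>q. {Inl (fst q), Inr (snd q)}) A"
  by (auto simp: inj_on_def K_eq prod_eq_iff)

lemma card_LI: "card (LI A) = card A" unfolding LI_def by (rule card_image[OF inj_LI])
lemma card_RI: "card (RI A) = card A" unfolding RI_def by (rule card_image[OF inj_RI])
lemma card_KI: "card (KI A) = card A" unfolding KI_def by (rule card_image[OF inj_KI])

lemma LI_Un: "LI (A \<union> B) = LI A \<union> LI B" unfolding LI_def by auto
lemma RI_Un: "RI (A \<union> B) = RI A \<union> RI B" unfolding RI_def by auto
lemma KI_Un: "KI (A \<union> B) = KI A \<union> KI B" unfolding KI_def by auto
lemma LI_mono: "A \<subseteq> B \<Longrightarrow> LI A \<subseteq> LI B" unfolding LI_def by auto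
lemma RI_mono: "A \<subseteq> B \<Longrightarrow> RI A \<subseteq> RI B" unfolding RI_def by auto
lemma KI_mono: "A \<subseteq> B \<Longrightarrow> KI A \<subseteq> KI B" unfolding KI_def by auto

lemma LI_RI_disj: "\<forall>b\<in>B. b \<noteq> {} \<Longrightarrow> LI A \<inter> RI B = {}"
  unfolding LI_def RI_def by auto
lemma LI_KI_disj: "LI A \<inter> KI D = {}"
  unfolding LI_def KI_def by (auto simp: doubleton_eq_iff)
lemma RI_KI_disj: "RI B \<inter> KI D = {}"
  unfolding RI_def KI_def by auto
lemma LI_Int: "LI A \<inter> LI A' = LI (A \<inter> A')"
  unfolding LI_def using inj_LI by (simp add: image_Int inj_LI inj_image_eq_iff inj_on_def)
lemma RI_Int: "RI A \<inter> RI A' = RI (A \<inter> A')"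
  unfolding RI_def by (auto simp: Inr_img_eq)
lemma KI_Int: "KI A \<inter> KI A' = KI (A \<inter> A')"
  unfolding KI_def by (auto simp: K_eq prod_eq_iff)

lemma disj3:
  assumes "A \<inter> A' = {}" "B \<inter> B' = {}" "D \<inter> D' = {}" "\<forall>b\<in>B \<union> B'. b \<noteq> {}"
  shows "(LI A \<union> RI B \<union> KI D) \<inter> (LI A' \<union> RI B' \<union> KI D') = {}"
proof -
  have 1: "LI A \<inter> RI B' = {}" by (rule LI_RI_disj) (use assms(4) in blast)
  have 2: "LI A' \<inter> RI B = {}" by (rule LI_RI_disj) (use assms(4) in blast)
  have 3: "LI A \<inter> LI A' = {}" unfolding LI_Int assms(1) by (simp add: LI_def)
  have 4: "RI B \<inter> RI B' = {}" unfolding RI_Int assms(2) by (simp add: RI_def)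
  have 5: "KI D \<inter> KI D' = {}" unfolding KI_Int assms(3) by (simp add: KI_def)
  have 6: "LI A \<inter> KI D' = {}" by (rule LI_KI_disj)
  have 7: "LI A' \<inter> KI D = {}" by (rule LI_KI_disj)
  have 8: "RI B \<inter> KI D' = {}" by (rule RI_KI_disj)
  have 9: "RI B' \<inter> KI D = {}" by (rule RI_KI_disj)
  show ?thesis unfolding Int_Un_distrib Int_Un_distrib2 Un_empty
    using 1 2 3 4 5 6 7 8 9 by (simp add: Int_commute)
qed

lemma P_edge0: "\<forall>e\<in>P_edges. e \<subseteq> P_verts \<and> card e = 2"
  unfolding P_edges_eq pv by simp

lemma P_edge: "e \<in> P_edges \<Longrightarrow> \<exists>a b. a \<in> P_verts \<and> b \<in> P_verts \<and> a \<noteq> b \<and> e = {a, b}"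
proof -
  assume "e \<in> P_edges"
  then have "e \<subseteq> P_verts" "card e = 2" using P_edge0 by auto
  then show ?thesis by (auto simp: card_2_iff)
qed

lemma P_edge_ne: "e \<in> P_edges \<Longrightarrow> e \<noteq> {}"
proof
  assume "e \<in> P_edges" "e = {}"
  then show False using P_edge0 by auto
qed

lemma finite_P_edges: "finite P_edges" unfolding P_edges_eq by simp

locale asm =
  fixes V :: "'a set" and E :: "'a set set" and u :: 'a and Q :: "('a \<times> nat) set"
    and T C M :: "'a set set"
  assumes gr: "graph V E" and uV: "u \<in> V" and nbr: "{v \<in> V. {u, v} \<in> E} = fst ` Q"
    and Qfin: "finite Q" and Qne: "Q \<noteq> {}" and injf: "inj_on fst Q" and injs: "inj_on snd Q"
    and Qp: "snd ` Q \<subseteq> P_verts"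
    and st: "spanning_tree V E T" and tr: "two_regular_sub E C" and mt: "matching E M"
    and un: "T \<union> C \<union> M = E" and dTC: "T \<inter> C = {}" and dTM: "T \<inter> M = {}" and dCM: "C \<inter> M = {}"
begin

definition X0 :: "'a set set \<Rightarrow> 'a set set" where "X0 X = {e \<in> X. u \<notin> e}"
definition QX :: "'a set set \<Rightarrow> ('a \<times> nat) set" where "QX X = {q \<in> Q. {u, fst q} \<in> X}"

lemma edgeE: "e \<in> E \<Longrightarrow> \<exists>x y. x \<in> V \<and> y \<in> V \<and> x \<noteq> y \<and> e = {x, y}"
  using gr unfolding graph_def by blast

lemma finV: "finite V" using gr unfolding graph_def by blast

lemma finE: "finite E"
proof -
  have "E \<subseteq> Pow V" using gr unfolding graph_def by auto
  then show ?thesis using finV by (meson finite_Pow_iff finite_subset)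
qed

lemma TE: "T \<subseteq> E" and CE: "C \<subseteq> E" and ME: "M \<subseteq> E" using un by auto

lemma qV: "q \<in> Q \<Longrightarrow> fst q \<in> V \<and> {u, fst q} \<in> E"
proof -
  assume "q \<in> Q"
  then have "fst q \<in> {v \<in> V. {u, v} \<in> E}" using nbr by blast
  then show ?thesis by simp
qed

lemma qu: "q \<in> Q \<Longrightarrow> fst q \<noteq> u"
proof
  assume "q \<in> Q" "fst q = u"
  then have "{u} \<in> E" using qV by fastforce
  then obtain x y where "x \<noteq> y" "{u} = {x, y}" using edgeE by blast
  then show False by (auto simp: doubleton_eq_iff)
qed

lemma qP: "q \<in> Q \<Longrightarrow> snd q \<in> P_verts" using Qp by blast

lemma uedge: "e \<in> E \<Longrightarrow> u \<in> e \<Longrightarrow> \<exists>q\<in>Q. e = {u, fst q}"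
proof -
  assume e: "e \<in> E" "u \<in> e"
  then obtain x y where xy: "x \<in> V" "y \<in> V" "x \<noteq> y" "e = {x, y}" using edgeE by blast
  then obtain w where w: "w \<in> V" "e = {u, w}" using e(2) by (auto simp: insert_commute)
  then have "w \<in> {v \<in> V. {u, v} \<in> E}" using e(1) by simp
  then have "w \<in> fst ` Q" using nbr by simp
  then show ?thesis using w by auto
qed

lemma inj_uq: "inj_on (\<lambda>q. {u, fst q}) Q"
proof (rule inj_onI)
  fix q q' assume q: "q \<in> Q" "q' \<in> Q" "{u, fst q} = {u, fst q'}"
  then have "fst q = fst q'" using qu[OF q(1)] qu[OF q(2)] by (auto simp: doubleton_eq_iff)
  then show "q = q'" using injf q(1,2) by (simp add: inj_on_def)
qed

lemma u_edges: "X \<subseteq> E \<Longrightarrow> {e \<in> X. u \<in> e} = (\<lambda>q. {u, fst q}) ` QX X"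
proof
  assume X: "X \<subseteq> E"
  show "{e \<in> X. u \<in> e} \<subseteq> (\<lambda>q. {u, fst q}) ` QX X"
  proof
    fix e assume "e \<in> {e \<in> X. u \<in> e}"
    then have e: "e \<in> X" "u \<in> e" by auto
    then obtain q where "q \<in> Q" "e = {u, fst q}" using uedge X by blast
    then show "e \<in> (\<lambda>q. {u, fst q}) ` QX X" using e unfolding QX_def by auto
  qed
next
  show "(\<lambda>q. {u, fst q}) ` QX X \<subseteq> {e \<in> X. u \<in> e}" unfolding QX_def by auto
qed

lemma card_split: "X \<subseteq> E \<Longrightarrow> card X = card (X0 X) + card (QX X)"
proof -
  assume X: "X \<subseteq> E"
  have fX: "finite X" using X finE by (rule finite_subset)
  have "X = X0 X \<union> {e \<in> X. u \<in> e}" unfolding X0_def by auto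
  moreover have "X0 X \<inter> {e \<in> X. u \<in> e} = {}" unfolding X0_def by auto
  ultimately have "card X = card (X0 X) + card {e \<in> X. u \<in> e}"
    using fX by (metis (no_types, lifting) card_Un_disjoint finite_Un)
  moreover have "card {e \<in> X. u \<in> e} = card (QX X)"
    unfolding u_edges[OF X] by (rule card_image) (rule inj_on_subset[OF inj_uq], auto simp: QX_def)
  ultimately show ?thesis by simp
qed

lemma QX_sub: "QX X \<subseteq> Q" unfolding QX_def by auto

end

locale asm2 = asm +
  fixes TP CP MP :: "nat set set" and QT QC QM :: "('a \<times> nat) set"
  assumes qun: "QT \<union> QC \<union> QM = Q" and qd1: "QT \<inter> QC = {}" and qd2: "QT \<inter> QM = {}"
    and qd3: "QC \<inter> QM = {}"
    and qc: "QC = QX C" and qt: "QX T \<subseteq> QT" and qm: "\<forall>q\<in>QM. fst q \<notin> \<Union>(X0 M)"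
    and pun: "TP \<union> CP \<union> MP = P_edges" and pd1: "TP \<inter> CP = {}" and pd2: "TP \<inter> MP = {}"
    and pd3: "CP \<inter> MP = {}"
    and mp: "\<forall>e\<in>MP. \<forall>f\<in>MP. e \<noteq> f \<longrightarrow> e \<inter> f = {}" and mq: "\<forall>q\<in>QM. snd q \<notin> \<Union>MP"
    and cp: "\<forall>a\<in>\<Union>CP \<union> snd ` QC. degree CP a + (if a \<in> snd ` QC then 1 else 0) = 2"
    and s2a: "\<forall>a\<in>P_verts. \<exists>q\<in>QT. (adj TP)\<^sup>*\<^sup>* a (snd q)"
    and s2b: "\<forall>q\<in>QX T. \<forall>q'\<in>QX T. (adj TP)\<^sup>*\<^sup>* (snd q) (snd q')"
    and cnt: "card TP + card QT \<le> 8 + card (QX T)"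
begin

definition T2 where "T2 = LI (X0 T) \<union> RI TP \<union> KI QT"
definition C2 where "C2 = LI (X0 C) \<union> RI CP \<union> KI QC"
definition M2 where "M2 = LI (X0 M) \<union> RI MP \<union> KI QM"
definition H2 where "H2 = LI (X0 E) \<union> RI P_edges \<union> KI Q"
definition VH where "VH = H_verts V u"

lemma union2: "T2 \<union> C2 \<union> M2 = H2"
proof -
  have a: "X0 T \<union> X0 C \<union> X0 M = X0 E" using un unfolding X0_def by auto
  have "T2 \<union> C2 \<union> M2 = LI (X0 T \<union> X0 C \<union> X0 M) \<union> RI (TP \<union> CP \<union> MP) \<union> KI (QT \<union> QC \<union> QM)"
    unfolding T2_def C2_def M2_def LI_Un RI_Un KI_Un by blast
  then show ?thesis unfolding a pun qun H2_def .
qed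

lemma X0_disj: "X \<inter> Y = {} \<Longrightarrow> X0 X \<inter> X0 Y = {}" unfolding X0_def by auto

lemma ne_P: "\<forall>b\<in>A \<union> B. b \<noteq> {}" if "A \<subseteq> P_edges" "B \<subseteq> P_edges"
  using that P_edge_ne by blast

lemma disjTC: "T2 \<inter> C2 = {}" unfolding T2_def C2_def
  by (rule disj3[OF X0_disj[OF dTC] pd1 qd1 ne_P]) (use pun in auto)
lemma disjTM: "T2 \<inter> M2 = {}" unfolding T2_def M2_def
  by (rule disj3[OF X0_disj[OF dTM] pd2 qd2 ne_P]) (use pun in auto)
lemma disjCM: "C2 \<inter> M2 = {}" unfolding C2_def M2_def
  by (rule disj3[OF X0_disj[OF dCM] pd3 qd3 ne_P]) (use pun in auto)

lemma subH: "T2 \<subseteq> H2" "C2 \<subseteq> H2" "M2 \<subseteq> H2" using union2 by blast+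

lemma graphH: "graph VH H2"
  unfolding graph_def
proof (intro conjI ballI)
  show "finite VH" unfolding VH_def H_verts_def P_verts_def using finV by simp
next
  fix e assume "e \<in> H2"
  then consider (L) e0 where "e0 \<in> X0 E" "e = Inl ` e0" | (R) e0 where "e0 \<in> P_edges" "e = Inr ` e0"
    | (K) q where "q \<in> Q" "e = {Inl (fst q), Inr (snd q)}"
    unfolding H2_def LI_def RI_def KI_def by blast
  then show "\<exists>x y. x \<in> VH \<and> y \<in> VH \<and> x \<noteq> y \<and> e = {x, y}"
  proof cases
    case L
    then have "e0 \<in> E" "u \<notin> e0" unfolding X0_def by auto
    then obtain x y where "x \<in> V" "y \<in> V" "x \<noteq> y" "e0 = {x, y}" using edgeE by blast
    then show ?thesis using L \<open>u \<notin> e0\<close> unfolding VH_def H_verts_def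
      by (intro exI[of _ "Inl x"] exI[of _ "Inl y"]) auto
  next
    case R
    then obtain x y where "x \<in> P_verts" "y \<in> P_verts" "x \<noteq> y" "e0 = {x, y}" using P_edge by blast
    then show ?thesis using R unfolding VH_def H_verts_def
      by (intro exI[of _ "Inr x"] exI[of _ "Inr y"]) auto
  next
    case K
    then show ?thesis using qV[OF K(1)] qu[OF K(1)] qP[OF K(1)] unfolding VH_def H_verts_def
      by (intro exI[of _ "Inl (fst q)"] exI[of _ "Inr (snd q)"]) auto
  qed
qed

lemma graph_sub: "graph W A \<Longrightarrow> B \<subseteq> A \<Longrightarrow> graph W B" unfolding graph_def by blast


lemma eT0: "{a, b} \<in> T \<Longrightarrow> u \<noteq> a \<Longrightarrow> u \<noteq> b \<Longrightarrow> {Inl a, Inl b} \<in> T2"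
proof -
  assume "{a, b} \<in> T" "u \<noteq> a" "u \<noteq> b"
  then have "{a, b} \<in> X0 T" unfolding X0_def by auto
  then have "Inl ` {a, b} \<in> LI (X0 T)" unfolding LI_def by blast
  then show ?thesis unfolding T2_def by simp
qed

lemma eK: "q \<in> QT \<Longrightarrow> {Inl (fst q), Inr (snd q)} \<in> T2"
  unfolding T2_def KI_def by blast

lemma eR: "{a, b} \<in> TP \<Longrightarrow> {Inr a, Inr b} \<in> T2"
proof -
  assume "{a, b} \<in> TP"
  then have "(Inr ` {a, b} :: ('a + nat) set) \<in> RI TP" unfolding RI_def by blast
  then show ?thesis unfolding T2_def by simp
qed

lemma TP_walk: "(adj TP)\<^sup>*\<^sup>* a b \<Longrightarrow> (adj T2)\<^sup>*\<^sup>* (Inr a) (Inr b)"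
proof -
  assume w: "(adj TP)\<^sup>*\<^sup>* a b"
  have "\<And>x y. adj TP x y \<Longrightarrow> adj T2 (Inr x) (Inr y) \<or> Inr x = Inr y" using eR by blast
  then show ?thesis using w by (rule walk_map)
qed

lemma Tconn: "connected_on V T" using st unfolding spanning_tree_def by blast

lemma step1_gen: "(adj T)\<^sup>*\<^sup>* x w \<Longrightarrow> w = u \<Longrightarrow> x \<in> V \<Longrightarrow> x \<noteq> u \<Longrightarrow>
    \<exists>q\<in>QX T. (adj T2)\<^sup>*\<^sup>* (Inl x) (Inr (snd q))"
proof (induction rule: converse_rtranclp_induct)
  case base
  then show ?case by simp
next
  case (step x y)
  show ?case
  proof (cases "y = u")
    case True
    then have xu: "{u, x} \<in> T" using step(1) by (simp add: insert_commute)
    then have "{u, x} \<in> E" using TE by blast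
    then have "x \<in> fst ` Q" using nbr step(5) by blast
    then obtain q where q: "q \<in> Q" "fst q = x" by blast
    then have "q \<in> QX T" unfolding QX_def using xu by simp
    then have "{Inl x, Inr (snd q)} \<in> T2" using eK qt q(2) by blast
    then have "(adj T2)\<^sup>*\<^sup>* (Inl x) (Inr (snd q))" by (rule r_into_rtranclp)
    then show ?thesis using \<open>q \<in> QX T\<close> by blast
  next
    case False
    have "y \<in> V" using step(1) TE edgeE by (fastforce simp: doubleton_eq_iff)
    then obtain q where q: "q \<in> QX T" "(adj T2)\<^sup>*\<^sup>* (Inl y) (Inr (snd q))"
      using step(3)[OF step(4) _ False] by blast
    have "{Inl x, Inl y} \<in> T2" using eT0[OF step(1)] step(6) False by metis
    then have "(adj T2)\<^sup>*\<^sup>* (Inl x) (Inr (snd q))" using q(2) by (rule converse_rtranclp_into_rtranclp)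
    then show ?thesis using q(1) by blast
  qed
qed

lemma step1: "x \<in> V \<Longrightarrow> x \<noteq> u \<Longrightarrow> \<exists>q\<in>QX T. (adj T2)\<^sup>*\<^sup>* (Inl x) (Inr (snd q))"
proof -
  assume x: "x \<in> V" "x \<noteq> u"
  have "(adj T)\<^sup>*\<^sup>* x u" using Tconn x(1) uV unfolding connected_on_def by blast
  then show ?thesis using step1_gen x by blast
qed

lemma QXT_ne: "QX T \<noteq> {}"
proof -
  obtain q where "q \<in> Q" using Qne by blast
  then show ?thesis using step1[of "fst q"] qV qu by blast
qed

lemma conn2: "connected_on VH T2"
proof -
  obtain q0 where q0: "q0 \<in> QX T" using QXT_ne by blast
  let ?h = "Inr (snd q0) :: 'a + nat"
  have hl: "(adj T2)\<^sup>*\<^sup>* (Inl x) ?h" if xx: "x \<in> V" "x \<noteq> u" for x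
  proof -
    obtain q where q: "q \<in> QX T" "(adj T2)\<^sup>*\<^sup>* (Inl x) (Inr (snd q))" using step1[OF xx] by blast
    have "(adj T2)\<^sup>*\<^sup>* (Inr (snd q)) ?h" using s2b q(1) q0 TP_walk by blast
    then show ?thesis using q(2) by (rule rtranclp_trans[rotated])
  qed
  show ?thesis
  proof (rule conn_root[of _ _ ?h])
    fix w assume "w \<in> VH"
    then consider (L) x where "x \<in> V" "x \<noteq> u" "w = Inl x" | (R) a where "a \<in> P_verts" "w = Inr a"
      unfolding VH_def H_verts_def by blast
    then show "(adj T2)\<^sup>*\<^sup>* w ?h"
    proof cases
      case L then show ?thesis using hl by simp
    next
      case R
      then obtain q where q: "q \<in> QT" "(adj TP)\<^sup>*\<^sup>* a (snd q)" using s2a by blast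
      have w1: "(adj T2)\<^sup>*\<^sup>* (Inr a) (Inr (snd q))" using TP_walk q(2) .
      have qQ: "q \<in> Q" using q(1) qun by blast
      have "{Inr (snd q), Inl (fst q)} \<in> T2" using eK[OF q(1)] by (simp add: insert_commute)
      then have w2: "(adj T2)\<^sup>*\<^sup>* (Inr (snd q)) (Inl (fst q))" by (rule r_into_rtranclp)
      have w3: "(adj T2)\<^sup>*\<^sup>* (Inl (fst q)) ?h" using hl qV[OF qQ] qu[OF qQ] by blast
      show ?thesis using R(2) rtranclp_trans[OF rtranclp_trans[OF w1 w2] w3] by simp
    qed
  qed
qed


lemma finX0: "finite (X0 X)" if "X \<subseteq> E" using that finE unfolding X0_def
  by (metis (no_types, lifting) finite_subset mem_Collect_eq subsetI subset_iff)

lemma card_T2: "card T2 = card (X0 T) + card TP + card QT"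
proof -
  have fTP: "finite TP" using pun finite_P_edges by (metis finite_Un)
  have fQT: "finite QT" using qun Qfin by (metis finite_Un)
  have f1: "finite (LI (X0 T))" unfolding LI_def using finX0[OF TE] by simp
  have f2: "finite (RI TP)" unfolding RI_def using fTP by simp
  have f3: "finite (KI QT)" unfolding KI_def using fQT by simp
  have d1: "LI (X0 T) \<inter> RI TP = {}" by (rule LI_RI_disj) (use pun P_edge_ne in blast)
  have d2: "(LI (X0 T) \<union> RI TP) \<inter> KI QT = {}" using LI_KI_disj RI_KI_disj by blast
  have "card T2 = card (LI (X0 T) \<union> RI TP) + card (KI QT)"
    unfolding T2_def by (rule card_Un_disjoint) (use f1 f2 f3 d2 in auto)
  also have "\<dots> = card (LI (X0 T)) + card (RI TP :: ('a + nat) set set) + card (KI QT)"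
    using card_Un_disjoint[OF f1 f2 d1] by simp
  finally show ?thesis by (simp add: card_LI card_RI card_KI)
qed

lemma card_VH: "card VH = card V + 8"
proof -
  have "card VH = card (Inl ` (V - {u}) :: ('a + nat) set) + card (Inr ` P_verts :: ('a + nat) set)"
    unfolding VH_def H_verts_def
    by (rule card_Un_disjoint) (use finV in \<open>auto simp: P_verts_def\<close>)
  also have "\<dots> = card (V - {u}) + card P_verts" by (simp add: card_image)
  also have "\<dots> = card V - 1 + 9" using uV finV by (simp add: pv)
  finally show ?thesis using uV finV card_gt_0_iff[of V] by auto
qed

lemma T2_acyclic: "acyclic_edges T2"
proof -
  obtain q where q: "q \<in> Q" using Qne by blast
  have r: "Inl (fst q) \<in> VH" using qV[OF q] qu[OF q] unfolding VH_def H_verts_def by auto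
  have g: "graph VH T2" by (rule graph_sub[OF graphH subH(1)])
  have cT: "card T + 1 \<le> card V" by (rule tree_card[OF finV uV st gr])
  have "card T = card (X0 T) + card (QX T)" by (rule card_split[OF TE])
  then have "card T2 + 1 \<le> card VH" using card_T2 card_VH cnt cT by linarith
  moreover have "finite VH" using g unfolding graph_def by blast
  ultimately show ?thesis using conn_acyclic[OF _ r conn2 g] by blast
qed

lemma T2_tree: "spanning_tree VH H2 T2"
  unfolding spanning_tree_def using subH(1) conn2 T2_acyclic by blast


lemma fin_QC: "finite QC" using qun Qfin by (metis finite_Un)
lemma fin_CP: "finite CP" using pun finite_P_edges by (metis finite_Un)

lemma deg_Inl:
  assumes x: "x \<in> V" "x \<noteq> u"
  shows "degree C2 (Inl x) = degree C x"
proof -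
  let ?A = "{e \<in> X0 C. x \<in> e}" and ?B = "{q \<in> QC. fst q = x}"
  have fA: "finite ?A" using finX0[OF CE] by simp
  have fB: "finite ?B" using fin_QC by simp
  have e1: "{e \<in> C2. Inl x \<in> e} = LI ?A \<union> KI ?B"
    unfolding C2_def LI_def RI_def KI_def by auto
  have "degree C2 (Inl x) = card (LI ?A \<union> KI ?B)" unfolding degree_def e1 ..
  also have "\<dots> = card (LI ?A) + card (KI ?B)"
    by (rule card_Un_disjoint) (use fA fB LI_KI_disj in \<open>auto simp: LI_def KI_def\<close>)
  also have "\<dots> = card ?A + card ?B" by (simp add: card_LI card_KI)
  finally have d2: "degree C2 (Inl x) = card ?A + card ?B" .
  have e2: "{e \<in> C. x \<in> e} = ?A \<union> (\<lambda>q. {u, fst q}) ` ?B"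
  proof
    show "{e \<in> C. x \<in> e} \<subseteq> ?A \<union> (\<lambda>q. {u, fst q}) ` ?B"
    proof
      fix e assume e: "e \<in> {e \<in> C. x \<in> e}"
      show "e \<in> ?A \<union> (\<lambda>q. {u, fst q}) ` ?B"
      proof (cases "u \<in> e")
        case False then show ?thesis using e unfolding X0_def by auto
      next
        case True
        then have "e \<in> {e \<in> C. u \<in> e}" using e by auto
        then obtain q where q: "q \<in> QX C" "e = {u, fst q}" using u_edges[OF CE] by blast
        then have "fst q = x" using e x(2) by auto
        then show ?thesis using q qc by auto
      qed
    qed
  next
    show "?A \<union> (\<lambda>q. {u, fst q}) ` ?B \<subseteq> {e \<in> C. x \<in> e}"
      using qc unfolding X0_def QX_def by auto
  qed
  have "degree C x = card (?A \<union> (\<lambda>q. {u, fst q}) ` ?B)" unfolding degree_def e2 ..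
  also have "\<dots> = card ?A + card ((\<lambda>q. {u, fst q}) ` ?B)"
    by (rule card_Un_disjoint) (use fA fB in \<open>auto simp: X0_def\<close>)
  also have "card ((\<lambda>q. {u, fst q}) ` ?B) = card ?B"
    by (rule card_image, rule inj_on_subset[OF inj_uq]) (use qun in auto)
  finally show ?thesis using d2 by simp
qed

lemma card_snd: "card {q \<in> QC. snd q = a} = (if a \<in> snd ` QC then 1 else 0)"
proof (cases "a \<in> snd ` QC")
  case True
  then obtain q0 where q0: "q0 \<in> QC" "snd q0 = a" by blast
  have "{q \<in> QC. snd q = a} = {q0}"
  proof (intro set_eqI iffI)
    fix q assume "q \<in> {q \<in> QC. snd q = a}"
    then have "q \<in> Q" "snd q = snd q0" "q0 \<in> Q" using q0 qun by auto
    then have "q = q0" using injs by (simp add: inj_on_def)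
    then show "q \<in> {q0}" by simp
  qed (use q0 in auto)
  then show ?thesis using True by simp
next
  case False
  then have e: "{q \<in> QC. snd q = a} = {}" by force
  show ?thesis unfolding e using False by simp
qed

lemma deg_Inr: "degree C2 (Inr a) = degree CP a + (if a \<in> snd ` QC then 1 else 0)"
proof -
  let ?A = "{e \<in> CP. a \<in> e}" and ?B = "{q \<in> QC. snd q = a}"
  have fA: "finite ?A" using fin_CP by simp
  have fB: "finite ?B" using fin_QC by simp
  have e1: "{e \<in> C2. Inr a \<in> e} = RI ?A \<union> KI ?B"
    unfolding C2_def LI_def RI_def KI_def by auto
  have "degree C2 (Inr a) = card (RI ?A \<union> KI ?B)" unfolding degree_def e1 ..
  also have "\<dots> = card (RI ?A :: ('a + nat) set set) + card (KI ?B)"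
    by (rule card_Un_disjoint) (use fA fB RI_KI_disj in \<open>auto simp: RI_def KI_def\<close>)
  also have "\<dots> = card ?A + card ?B" by (simp add: card_RI card_KI)
  finally show ?thesis unfolding card_snd by (simp add: degree_def)
qed

lemma C2_reg: "two_regular_sub H2 C2"
  unfolding two_regular_sub_def
proof (intro conjI ballI)
  show "C2 \<subseteq> H2" by (rule subH(2))
next
  fix w assume "w \<in> \<Union>C2"
  then obtain e where e: "e \<in> C2" "w \<in> e" by blast
  then consider (L) e0 where "e0 \<in> X0 C" "e = Inl ` e0" | (R) e0 where "e0 \<in> CP" "e = Inr ` e0"
    | (K) q where "q \<in> QC" "e = {Inl (fst q), Inr (snd q)}"
    unfolding C2_def LI_def RI_def KI_def by blast
  then show "degree C2 w = 2"
  proof cases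
    case L
    then obtain x where x: "x \<in> e0" "w = Inl x" using e by blast
    have e0: "e0 \<in> C" "u \<notin> e0" using L unfolding X0_def by auto
    then obtain a b where "a \<in> V" "b \<in> V" "e0 = {a, b}" using edgeE CE by blast
    then have xV: "x \<in> V" using x by auto
    have "degree C x = 2" using tr e0 x unfolding two_regular_sub_def by blast
    then show ?thesis using deg_Inl[OF xV] x e0 by auto
  next
    case R
    then obtain a where a: "a \<in> e0" "w = Inr a" using e by blast
    then have "a \<in> \<Union>CP" using R by blast
    then show ?thesis using cp deg_Inr a by auto
  next
    case K
    have qQ: "q \<in> Q" using K qun by blast
    have w: "w = Inl (fst q) \<or> w = Inr (snd q)" using K e by auto
    then show ?thesis
    proof
      assume w: "w = Inl (fst q)"
      have "{u, fst q} \<in> C" using K qc unfolding QX_def by auto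
      then have "degree C (fst q) = 2" using tr unfolding two_regular_sub_def by blast
      then show ?thesis using deg_Inl[OF conjunct1[OF qV[OF qQ]] qu[OF qQ]] w by simp
    next
      assume w: "w = Inr (snd q)"
      have sq: "snd q \<in> snd ` QC" using K by blast
      then have "degree CP (snd q) + (if snd q \<in> snd ` QC then 1 else 0) = 2" using cp by blast
      then show ?thesis using deg_Inr[of "snd q"] w by simp
    qed
  qed
qed


lemma M2_match: "matching H2 M2"
  unfolding matching_def
proof (intro conjI ballI impI)
  show "M2 \<subseteq> H2" by (rule subH(3))
next
  have mM: "\<forall>e\<in>M. \<forall>f\<in>M. e \<noteq> f \<longrightarrow> e \<inter> f = {}" using mt unfolding matching_def by blast
  have kind: "(\<exists>e0\<in>X0 M. e = Inl ` e0) \<or> (\<exists>e0\<in>MP. e = Inr ` e0) \<or> (\<exists>q\<in>QM. e = {Inl (fst q), Inr (snd q)})"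
    if "e \<in> M2" for e using that unfolding M2_def LI_def RI_def KI_def by blast
  have LL: "Inl ` e0 \<inter> Inl ` f0 = ({} :: ('a + nat) set)" if "e0 \<in> X0 M" "f0 \<in> X0 M" "e0 \<noteq> f0" for e0 f0
  proof -
    have "e0 \<inter> f0 = {}" using mM that unfolding X0_def by blast
    then show ?thesis by auto
  qed
  have RR: "Inr ` e0 \<inter> Inr ` f0 = ({} :: ('a + nat) set)" if "e0 \<in> MP" "f0 \<in> MP" "e0 \<noteq> f0" for e0 f0
  proof -
    have "e0 \<inter> f0 = {}" using mp that by blast
    then show ?thesis by auto
  qed
  have LR: "Inl ` e0 \<inter> Inr ` f0 = ({} :: ('a + nat) set)" for e0 f0 by auto
  have LK: "Inl ` e0 \<inter> {Inl (fst q), Inr (snd q)} = {}" if "e0 \<in> X0 M" "q \<in> QM" for e0 q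
  proof -
    have "fst q \<notin> e0" using qm that by blast
    then show ?thesis by auto
  qed
  have RK: "Inr ` e0 \<inter> {Inl (fst q), Inr (snd q)} = {}" if "e0 \<in> MP" "q \<in> QM" for e0 q
  proof -
    have "snd q \<notin> e0" using mq that by blast
    then show ?thesis by auto
  qed
  have KK: "{Inl (fst q), Inr (snd q)} \<inter> {Inl (fst q'), Inr (snd q')} = {}"
    if "q \<in> QM" "q' \<in> QM" "{Inl (fst q), Inr (snd q)} \<noteq> {Inl (fst q'), Inr (snd q')}" for q q'
  proof -
    have qq: "q \<in> Q" "q' \<in> Q" using that(1,2) qun by auto
    have "q \<noteq> q'" using that(3) by auto
    then have "fst q \<noteq> fst q'" "snd q \<noteq> snd q'" using injf injs qq unfolding inj_on_def by auto
    then show ?thesis by auto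
  qed
  fix e f assume e: "e \<in> M2" and f: "f \<in> M2" and ne: "e \<noteq> f"
  from kind[OF e] kind[OF f] show "e \<inter> f = {}"
  proof (elim disjE bexE)
    fix e0 f0 assume "e0 \<in> X0 M" "e = Inl ` e0" "f0 \<in> X0 M" "f = Inl ` f0"
    then show ?thesis using LL ne by blast
  next
    fix e0 f0 assume "e0 \<in> X0 M" "e = Inl ` e0" "f0 \<in> MP" "f = Inr ` f0"
    then show ?thesis using LR by blast
  next
    fix e0 q assume "e0 \<in> X0 M" "e = Inl ` e0" "q \<in> QM" "f = {Inl (fst q), Inr (snd q)}"
    then show ?thesis using LK by blast
  next
    fix e0 f0 assume "e0 \<in> MP" "e = Inr ` e0" "f0 \<in> X0 M" "f = Inl ` f0"
    then show ?thesis using LR[of f0 e0] by blast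
  next
    fix e0 f0 assume "e0 \<in> MP" "e = Inr ` e0" "f0 \<in> MP" "f = Inr ` f0"
    then show ?thesis using RR ne by blast
  next
    fix e0 q assume "e0 \<in> MP" "e = Inr ` e0" "q \<in> QM" "f = {Inl (fst q), Inr (snd q)}"
    then show ?thesis using RK by blast
  next
    fix q f0 assume "q \<in> QM" "e = {Inl (fst q), Inr (snd q)}" "f0 \<in> X0 M" "f = Inl ` f0"
    then show ?thesis using LK[of f0 q] by blast
  next
    fix q f0 assume "q \<in> QM" "e = {Inl (fst q), Inr (snd q)}" "f0 \<in> MP" "f = Inr ` f0"
    then show ?thesis using RK[of f0 q] by blast
  next
    fix q q' assume "q \<in> QM" "e = {Inl (fst q), Inr (snd q)}" "q' \<in> QM" "f = {Inl (fst q'), Inr (snd q')}"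
    then show ?thesis using KK ne by blast
  qed
qed

lemma result: "three_decomposition VH H2"
  unfolding three_decomposition_def
  using T2_tree C2_reg M2_match union2 disjTC disjTM disjCM by blast

end

lemma cfgC_any:
  assumes "a \<in> {1,4,5}" "b \<in> {1,4,5}" "a \<noteq> b"
  shows "\<exists>TP CP MP. TP \<union> CP \<union> MP = P_edges \<and> TP \<inter> CP = {} \<and> TP \<inter> MP = {} \<and> CP \<inter> MP = {} \<and>
  (\<forall>e\<in>MP. \<forall>f\<in>MP. e \<noteq> f \<longrightarrow> e \<inter> f = {}) \<and> connected_on P_verts TP \<and> card TP = 8 \<and>
  (\<forall>c\<in>\<Union>CP \<union> {a,b}. degree CP c + (if c \<in> {a,b} then 1 else 0) = 2)"
proof -
  have "{a,b} = {1,4} \<or> {a,b} = {1,5} \<or> {a,b} = {4,5}" using assms by auto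
  then show ?thesis
  proof (elim disjE)
    assume h: "{a,b} = {1,4}" show ?thesis unfolding h by (rule cfgC14)
  next
    assume h: "{a,b} = {1,5}" show ?thesis unfolding h by (rule cfgC15)
  next
    assume h: "{a,b} = {4,5}" show ?thesis unfolding h by (rule cfgC45)
  qed
qed

lemma le1: "finite A \<Longrightarrow> card A \<le> 1 \<Longrightarrow> A = {} \<or> (\<exists>x. A = {x})"
proof -
  assume "finite A" "card A \<le> 1"
  then have h: "\<forall>x\<in>A. \<forall>y\<in>A. x = y" using card_le_Suc0_iff_eq by auto
  show ?thesis
  proof (cases "A = {}")
    case False
    then obtain x where "x \<in> A" by blast
    then have "A = {x}" using h by blast
    then show ?thesis by blast
  qed simp
qed

lemma cfgB_any:
  assumes "m \<in> {1,4,5}"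
  shows "\<exists>TP CP. TP \<union> CP \<union> {} = P_edges \<and> TP \<inter> CP = {} \<and> TP \<inter> {} = {} \<and> CP \<inter> {} = {} \<and>
  (\<forall>a\<in>\<Union>CP. degree CP a = 2) \<and> card TP = 7 \<and> (\<forall>a\<in>P_verts. \<exists>p\<in>{1,4,5}. (adj TP)\<^sup>*\<^sup>* a p) \<and>
  (\<forall>p\<in>{1,4,5}-{m}. \<forall>p'\<in>{1,4,5}-{m}. (adj TP)\<^sup>*\<^sup>* p p')"
proof -
  have "m = 1 \<or> m = 4 \<or> m = 5" using assms by auto
  then show ?thesis
  proof (elim disjE)
    assume h: "m = 1" show ?thesis unfolding h by (rule cfgB1)
  next
    assume h: "m = 4" show ?thesis unfolding h by (rule cfgB4)
  next
    assume h: "m = 5" show ?thesis unfolding h by (rule cfgB5)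
  qed
qed

lemma conn_use: "connected_on S T \<Longrightarrow> x \<in> S \<Longrightarrow> y \<in> S \<Longrightarrow> (adj T)\<^sup>*\<^sup>* x y"
  unfolding connected_on_def by blast

context asm
begin

lemma QX_un: "QX T \<union> QX C \<union> QX M = Q"
  using qV un unfolding QX_def by auto

lemma QX_d: "QX T \<inter> QX C = {}" "QX T \<inter> QX M = {}" "QX C \<inter> QX M = {}"
  using dTC dTM dCM unfolding QX_def by auto

lemma QXM_le: "card (QX M) \<le> 1"
proof -
  have "q = q'" if "q \<in> QX M" "q' \<in> QX M" for q q'
  proof (rule ccontr)
    assume ne: "q \<noteq> q'"
    have qq: "q \<in> Q" "q' \<in> Q" using that QX_sub by auto
    have n: "{u, fst q} \<noteq> {u, fst q'}"
    proof
      assume "{u, fst q} = {u, fst q'}"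
      then have "q = q'" by (rule inj_onD[OF inj_uq _ qq])
      then show False using ne by simp
    qed
    have i: "{u, fst q} \<in> M" "{u, fst q'} \<in> M" using that unfolding QX_def by auto
    have mm: "\<forall>e\<in>M. \<forall>f\<in>M. e \<noteq> f \<longrightarrow> e \<inter> f = {}" using mt unfolding matching_def by simp
    have "{u, fst q} \<inter> {u, fst q'} = {}" by (rule mm[rule_format, OF i n])
    then show False by auto
  qed
  moreover have "finite (QX M)" using Qfin QX_sub by (rule finite_subset[rotated])
  ultimately show ?thesis using card_le_Suc0_iff_eq[of "QX M"] by simp
qed

lemma QXC_02: "QX C = {} \<or> card (QX C) = 2"
proof (cases "QX C = {}")
  case False
  then obtain q where q: "q \<in> QX C" by blast
  then have "u \<in> \<Union>C" unfolding QX_def by auto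
  then have "degree C u = 2" using tr unfolding two_regular_sub_def by blast
  moreover have "degree C u = card (QX C)"
    unfolding degree_def u_edges[OF CE]
    by (rule card_image, rule inj_on_subset[OF inj_uq QX_sub])
  ultimately show ?thesis by simp
qed simp

lemma QXT_ne0: "QX T \<noteq> {}"
proof -
  obtain q where q: "q \<in> Q" using Qne by blast
  have "(adj T)\<^sup>*\<^sup>* u (fst q)" using st uV qV[OF q] unfolding spanning_tree_def connected_on_def by blast
  moreover have "u \<noteq> fst q" using qu[OF q] by simp
  ultimately have "\<exists>y. adj T u y" by (auto elim: converse_rtranclpE)
  then obtain y where y: "adj T u y" by blast
  then have "{u, y} \<in> E" using TE by blast
  moreover have "y \<in> V"
  proof -
    obtain a b where "a \<in> V" "b \<in> V" "{u, y} = {a, b}" using edgeE \<open>{u, y} \<in> E\<close> by blast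
    then show ?thesis by (auto simp: doubleton_eq_iff)
  qed
  ultimately have "y \<in> fst ` Q" using nbr by blast
  then obtain q' where "q' \<in> Q" "fst q' = y" by blast
  then have "q' \<in> QX T" unfolding QX_def using y by simp
  then show ?thesis by blast
qed

lemma main_asm:
  assumes sQ: "snd ` Q = {1,4,5}"
  shows "three_decomposition (H_verts V u) (LI (X0 E) \<union> RI P_edges \<union> KI Q)"
proof -
  have cQ: "card Q = 3"
  proof -
    have "card (snd ` Q) = card Q" by (rule card_image[OF injs])
    then show ?thesis using sQ by simp
  qed
  have fin: "finite (QX X)" for X by (rule finite_subset[OF QX_sub Qfin])
  have cpart: "card (QX T) + card (QX C) + card (QX M) = 3"
  proof -
    have d: "(QX T \<union> QX C) \<inter> QX M = {}" using QX_d by blast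
    have "card (QX T \<union> QX C \<union> QX M) = card (QX T \<union> QX C) + card (QX M)"
      by (rule card_Un_disjoint[OF _ fin d]) (simp add: fin)
    also have "card (QX T \<union> QX C) = card (QX T) + card (QX C)"
      by (rule card_Un_disjoint[OF fin fin QX_d(1)])
    finally have "card (QX T \<union> QX C \<union> QX M) = card (QX T) + card (QX C) + card (QX M)" .
    then show ?thesis using QX_un cQ by simp
  qed
  have cT: "card (QX T) \<ge> 1" using QXT_ne0 fin[of T] by (simp add: Suc_le_eq card_gt_0_iff)
  have m01: "QX M = {} \<or> (\<exists>x. QX M = {x})" by (rule le1[OF fin QXM_le])
  consider (I) "QX C = {}" "QX M = {}" | (II) qm where "QX C = {}" "QX M = {qm}"
    | (III) "card (QX C) = 2"
    using QXC_02 m01 by blast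
  then show ?thesis
  proof cases
    case I
    obtain TP MP where c: "TP \<union> {} \<union> MP = P_edges" "TP \<inter> {} = {}" "TP \<inter> MP = {}" "{} \<inter> MP = {}"
      "\<forall>e\<in>MP. \<forall>f\<in>MP. e \<noteq> f \<longrightarrow> e \<inter> f = {}" "connected_on P_verts TP" "card TP = 8"
      using cfgA by (elim exE conjE) (rule that; assumption)
    have QT: "QX T = Q" using QX_un I by simp
    interpret a2: asm2 V E u Q T C M TP "{}" MP Q "{}" "{}"
    proof (unfold_locales)
      show "\<forall>a\<in>P_verts. \<exists>q\<in>Q. (adj TP)\<^sup>*\<^sup>* a (snd q)"
      proof
        fix a assume a: "a \<in> P_verts"
        obtain q where q: "q \<in> Q" using Qne by blast
        have "(adj TP)\<^sup>*\<^sup>* a (snd q)" by (rule conn_use[OF c(6) a qP[OF q]])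
        then show "\<exists>q\<in>Q. (adj TP)\<^sup>*\<^sup>* a (snd q)" using q by blast
      qed
      show "\<forall>q\<in>QX T. \<forall>q'\<in>QX T. (adj TP)\<^sup>*\<^sup>* (snd q) (snd q')"
      proof (intro ballI)
        fix q q' assume "q \<in> QX T" "q' \<in> QX T"
        then have "q \<in> Q" "q' \<in> Q" using QX_sub by auto
        then show "(adj TP)\<^sup>*\<^sup>* (snd q) (snd q')" by (intro conn_use[OF c(6)] qP)
      qed
      show "card TP + card Q \<le> 8 + card (QX T)" using c(7) QT by simp
    qed (use c I QX_sub in simp_all)
    show ?thesis using a2.result unfolding a2.VH_def a2.H2_def .
  next
    case II
    have qmQ: "qm \<in> Q" using II QX_sub by blast
    have QT: "QX T = Q - {qm}" using QX_un QX_d II by auto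
    have m: "snd qm \<in> {1,4,5}" using sQ qmQ by blast
    obtain TP CP where c: "TP \<union> CP \<union> {} = P_edges" "TP \<inter> CP = {}"
      "\<forall>a\<in>\<Union>CP. degree CP a = 2" "card TP = 7" "\<forall>a\<in>P_verts. \<exists>p\<in>{1,4,5}. (adj TP)\<^sup>*\<^sup>* a p"
      "\<forall>p\<in>{1,4,5}-{snd qm}. \<forall>p'\<in>{1,4,5}-{snd qm}. (adj TP)\<^sup>*\<^sup>* p p'"
      using cfgB_any[OF m] by (elim exE conjE) (rule that; assumption)
    have cQT: "card (QX T) = 2" using QT cQ qmQ Qfin by simp
    interpret a2: asm2 V E u Q T C M TP CP "{}" Q "{}" "{}"
    proof (unfold_locales)
      show "\<forall>a\<in>P_verts. \<exists>q\<in>Q. (adj TP)\<^sup>*\<^sup>* a (snd q)"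
      proof
        fix a assume "a \<in> P_verts"
        then obtain p where p: "p \<in> {1,4,5}" "(adj TP)\<^sup>*\<^sup>* a p" using c(5) by blast
        then have "p \<in> snd ` Q" using sQ by simp
        then obtain q where "q \<in> Q" "snd q = p" by blast
        then show "\<exists>q\<in>Q. (adj TP)\<^sup>*\<^sup>* a (snd q)" using p(2) by blast
      qed
      show "\<forall>q\<in>QX T. \<forall>q'\<in>QX T. (adj TP)\<^sup>*\<^sup>* (snd q) (snd q')"
      proof (intro ballI)
        fix q q' assume "q \<in> QX T" "q' \<in> QX T"
        then have "q \<in> Q" "q \<noteq> qm" "q' \<in> Q" "q' \<noteq> qm" using QT by auto
        then have "snd q \<in> {1,4,5} - {snd qm}" "snd q' \<in> {1,4,5} - {snd qm}"
          using sQ injs qmQ unfolding inj_on_def by auto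
        then show "(adj TP)\<^sup>*\<^sup>* (snd q) (snd q')" using c(6) by blast
      qed
      show "card TP + card Q \<le> 8 + card (QX T)" using c(4) cQ cQT by simp
    qed (use c II QX_sub in simp_all)
    show ?thesis using a2.result unfolding a2.VH_def a2.H2_def .
  next
    case III
    then obtain qa qb where qab: "QX C = {qa, qb}" "qa \<noteq> qb" by (meson card_2_iff)
    have "card (QX M) = 0" using cpart III cT by simp
    then have M0: "QX M = {}" using fin[of M] by simp
    have qaQ: "qa \<in> Q" and qbQ: "qb \<in> Q" using qab QX_sub by auto
    have ab: "snd qa \<in> {1,4,5}" "snd qb \<in> {1,4,5}" "snd qa \<noteq> snd qb"
      using sQ qaQ qbQ qab(2) injs unfolding inj_on_def by auto
    obtain TP CP MP where c: "TP \<union> CP \<union> MP = P_edges" "TP \<inter> CP = {}" "TP \<inter> MP = {}" "CP \<inter> MP = {}"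
      "\<forall>e\<in>MP. \<forall>f\<in>MP. e \<noteq> f \<longrightarrow> e \<inter> f = {}" "connected_on P_verts TP" "card TP = 8"
      "\<forall>c\<in>\<Union>CP \<union> {snd qa, snd qb}. degree CP c + (if c \<in> {snd qa, snd qb} then 1 else 0) = 2"
      using cfgC_any[OF ab] by (elim exE conjE) (rule that; assumption)
    have sC: "snd ` QX C = {snd qa, snd qb}" using qab by simp
    interpret a2: asm2 V E u Q T C M TP CP MP "QX T" "QX C" "{}"
    proof (unfold_locales)
      show "QX T \<union> QX C \<union> {} = Q" using QX_un M0 by simp
      show "\<forall>a\<in>P_verts. \<exists>q\<in>QX T. (adj TP)\<^sup>*\<^sup>* a (snd q)"
      proof
        fix a assume a: "a \<in> P_verts"
        obtain q where q: "q \<in> QX T" using QXT_ne0 by blast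
        then have "q \<in> Q" using QX_sub by auto
        then have "(adj TP)\<^sup>*\<^sup>* a (snd q)" by (intro conn_use[OF c(6) a] qP)
        then show "\<exists>q\<in>QX T. (adj TP)\<^sup>*\<^sup>* a (snd q)" using q by blast
      qed
      show "\<forall>q\<in>QX T. \<forall>q'\<in>QX T. (adj TP)\<^sup>*\<^sup>* (snd q) (snd q')"
      proof (intro ballI)
        fix q q' assume "q \<in> QX T" "q' \<in> QX T"
        then have "q \<in> Q" "q' \<in> Q" using QX_sub by auto
        then show "(adj TP)\<^sup>*\<^sup>* (snd q) (snd q')" by (intro conn_use[OF c(6)] qP)
      qed
      show "\<forall>a\<in>\<Union>CP \<union> snd ` QX C. degree CP a + (if a \<in> snd ` QX C then 1 else 0) = 2"
        unfolding sC by (rule c(8))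
    qed (use c QX_d QX_sub in simp_all)
    show ?thesis using a2.result unfolding a2.VH_def a2.H2_def .
  qed
qed

end

theorem lemma18:
  fixes V :: "'a set" and E :: "'a set set" and u v1 v2 v3 :: 'a and p1 p2 p3 :: nat
  assumes "cubic V E"
    and "three_decomposition V E"
    and "u \<in> V"
    and "distinct [v1, v2, v3]"
    and "{v \<in> V. {u, v} \<in> E} = {v1, v2, v3}"
    and "distinct [p1, p2, p3]"
    and "{p \<in> P_verts. degree P_edges p = 2} = {p1, p2, p3}"
  shows "three_decomposition (H_verts V u) (H_edges E u v1 v2 v3 p1 p2 p3)"
proof -
  have gr: "graph V E" using assms(1) unfolding cubic_def by blast
  obtain T C M where d: "spanning_tree V E T" "two_regular_sub E C" "matching E M"
    "T \<union> C \<union> M = E" "T \<inter> C = {}" "T \<inter> M = {}" "C \<inter> M = {}"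
    using assms(2) unfolding three_decomposition_def by blast
  define Q where "Q = {(v1, p1), (v2, p2), (v3, p3)}"
  have sQ: "snd ` Q = {1,4,5}" using assms(7) P_deg unfolding Q_def by simp
  have fQ: "fst ` Q = {v1, v2, v3}" unfolding Q_def by simp
  interpret a: asm V E u Q T C M
  proof (unfold_locales)
    show "graph V E" by (rule gr)
    show "u \<in> V" by (rule assms(3))
    show "{v \<in> V. {u, v} \<in> E} = fst ` Q" using assms(5) fQ by simp
    show "finite Q" unfolding Q_def by simp
    show "Q \<noteq> {}" unfolding Q_def by simp
    show "inj_on fst Q" using assms(4) unfolding Q_def inj_on_def by auto
    show "inj_on snd Q" using assms(6) unfolding Q_def inj_on_def by auto
    show "snd ` Q \<subseteq> P_verts" using sQ by (simp add: pv)
  qed (use d in auto)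
  have "three_decomposition (H_verts V u) (LI (a.X0 E) \<union> RI P_edges \<union> KI Q)"
    by (rule a.main_asm[OF sQ])
  moreover have "LI (a.X0 E) \<union> RI P_edges \<union> KI Q = H_edges E u v1 v2 v3 p1 p2 p3"
    unfolding H_edges_def LI_def RI_def KI_def a.X0_def Q_def by simp
  ultimately show ?thesis by simp
qed

end
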